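(* For $s\in\{1/2,1,3/2,\dots\}$, integers $0\le\sigma\le 2s$ and $-\sigma\le\mu\le\sigma$, let $p^{(s)}_{\sigma\mu}$ be the Majorana polynomial of the tensor operator $T^{(s)}_{\sigma\mu}$. Then: (1) $L\big(p^{(s)}_{\sigma\mu}\big)=\frac{\sqrt{(2s+\sigma+1)(2s-\sigma)}}{2s}\,p^{(s-1/2)}_{\sigma\mu}$ if $s>\sigma/2$, and $L\big(p^{(s)}_{\sigma\mu}\big)=0$ otherwise. In particular $(2s+1)^{-1/2}L\big(p^{(s)}_{00}\big)=(2s)^{-1/2}p^{(s-1/2)}_{00}$, and consequently $L$ preserves traces: for every operator $C$ on $\mathcal{H}_s$ ($s\ge 1$), the operator $C'$ on $\mathcal{H}_{s-1/2}$ with $p_{C'}=L(p_C)$ satisfies $\mathrm{Tr}\,C'=\mathrm{Tr}\,C$. (2) For every $\sigma\le 2s$, \[ p^{(s)}_{\sigma\mu}(z)=l(s,\sigma)^{-1}\,(z^az_a)^{2s-\sigma}\,p^{(\sigma/2)}_{\sigma\mu}(z),\qquad l(s,\sigma)=\sqrt{\frac{(2s+\sigma+1)!\,(2s-\sigma)!}{(2\sigma+1)!}}\;\frac{\sigma!}{(2s)!}. \]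
   Context: $\mathcal{H}_s$ is the spin-$s$ Hilbert space with orthonormal $S_z$-eigenbasis $\{|s,m\rangle\}$. The tensor operators are $T^{(s)}_{\sigma\mu}=\sum_{m,m'=-s}^{s}(-1)^{s-m'}C^{\sigma\mu}_{sm,\,s,-m'}|s,m\rangle\langle s,m'|$, where $C^{jm}_{j_1m_1,j_2m_2}$ are the standard Clebsch–Gordan coefficients. Treat $z_1,z_2,z^1,z^2$ as independent variables, $\partial_a=\partial/\partial z_a$, $\partial^a=\partial/\partial z^a$, and repeated indices $a\in\{1,2\}$ are summed (so $z^az_a=z^1z_1+z^2z_2$). With $\langle -\mathbf n_B|=\sum_m(-1)^{s-m}\sqrt{\binom{2s}{s-m}}z_1^{s+m}z_2^{s-m}\langle s,m|$ and $|-\mathbf n_B\rangle=\sum_m(-1)^{s-m}\sqrt{\binom{2s}{s-m}}(z^1)^{s+m}(z^2)^{s-m}|s,m\rangle$, the Majorana polynomial of an operator $C$ on $\mathcal{H}_s$ is $p_C=\langle-\mathbf n_B|C|-\mathbf n_B\rangle$; this is a bijection from operators on $\mathcal{H}_s$ to the space $P^{(N,N)}$ ($N=2s$) of polynomials all of whose monomials $z_1^\alpha z_2^\beta(z^1)^\gamma(z^2)^\delta$ have $\alpha+\beta=\gamma+\delta=N$. The partial trace operator $L:P^{(N,N)}\to P^{(N-1,N-1)}$ is $L(p)=N^{-2}\,\partial_a\partial^a p$. *)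

theory Defs
  imports "HOL-Analysis.Analysis"
begin

text \<open>A spin s in {0, 1/2, 1, ...} is represented by its double N = 2s (a nat).
  Magnetic quantum numbers m are represented by their doubles (integers 2m). All
  Clebsch-Gordan arguments are doubled angular momenta / projections.\<close>

definition half :: "int \<Rightarrow> nat" where
  "half x = nat (x div 2)"

text \<open>Inverse factorial of a doubled argument, with the standard convention 1/(-n)! = 0.\<close>
definition ifact2 :: "int \<Rightarrow> real" where
  "ifact2 x = (if x < 0 then 0 else 1 / fact (half x))"

definition fact2 :: "int \<Rightarrow> real" where
  "fact2 x = fact (half x)"

text \<open>Standard (Condon-Shortley) Clebsch-Gordan coefficient C^{J M}_{j1 m1, j2 m2}
  via Racah's formula; all six arguments are doubled.\<close>
definition cg :: "int \<Rightarrow> int \<Rightarrow> int \<Rightarrow> int \<Rightarrow> int \<Rightarrow> int \<Rightarrow> real" where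
  "cg j1 m1 j2 m2 J M =
    (if 0 \<le> j1 \<and> 0 \<le> j2 \<and> 0 \<le> J \<and> \<bar>m1\<bar> \<le> j1 \<and> \<bar>m2\<bar> \<le> j2 \<and> \<bar>M\<bar> \<le> J
        \<and> even (j1 + m1) \<and> even (j2 + m2) \<and> even (J + M) \<and> even (j1 + j2 + J)
        \<and> \<bar>j1 - j2\<bar> \<le> J \<and> J \<le> j1 + j2 \<and> M = m1 + m2
     then sqrt (real_of_int (J + 1) * fact2 (J + j1 - j2) * fact2 (J - j1 + j2)
                  * fact2 (j1 + j2 - J) / fact2 (j1 + j2 + J + 2))
        * sqrt (fact2 (J + M) * fact2 (J - M) * fact2 (j1 - m1) * fact2 (j1 + m1)
                  * fact2 (j2 - m2) * fact2 (j2 + m2))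
        * (\<Sum>k\<in>{0..half (j1 + j2)}. (-1) ^ k
             * ifact2 (2 * int k) * ifact2 (j1 + j2 - J - 2 * int k)
             * ifact2 (j1 - m1 - 2 * int k) * ifact2 (j2 + m2 - 2 * int k)
             * ifact2 (J - j2 + m1 + 2 * int k) * ifact2 (J - j1 - m2 + 2 * int k))
     else 0)"

text \<open>Doubled magnetic quantum numbers of spin N/2: 2m \<in> {-N, -N+2, ..., N}.\<close>
definition spins :: "nat \<Rightarrow> int set" where
  "spins N = {m. - int N \<le> m \<and> m \<le> int N \<and> even (int N + m)}"

text \<open>An operator on H_{N/2} is given by its matrix entries C m m' = <s,m|C|s,m'>
  (doubled indices; entries outside spins N are irrelevant).\<close>
type_synonym op = "int \<Rightarrow> int \<Rightarrow> complex"

text \<open>Functions of the four independent variables z_1, z_2, z^1, z^2 (in this order).\<close>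
type_synonym fn4 = "complex \<Rightarrow> complex \<Rightarrow> complex \<Rightarrow> complex \<Rightarrow> complex"

definition tensor_op :: "nat \<Rightarrow> nat \<Rightarrow> int \<Rightarrow> op" where
  "tensor_op N \<sigma> \<mu> = (\<lambda>m m'. (-1) ^ half (int N - m')
      * complex_of_real (cg (int N) m (int N) (- m') (2 * int \<sigma>) (2 * \<mu>)))"

definition majorana :: "nat \<Rightarrow> op \<Rightarrow> fn4" where
  "majorana N C = (\<lambda>z1 z2 w1 w2.
     \<Sum>m\<in>spins N. \<Sum>m'\<in>spins N.
       ((-1) ^ half (int N - m) * complex_of_real (sqrt (real (N choose half (int N - m))))
          * z1 ^ half (int N + m) * z2 ^ half (int N - m))
       * C m m'
       * ((-1) ^ half (int N - m') * complex_of_real (sqrt (real (N choose half (int N - m'))))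
          * w1 ^ half (int N + m') * w2 ^ half (int N - m')))"

definition op_trace :: "nat \<Rightarrow> op \<Rightarrow> complex" where
  "op_trace N C = (\<Sum>m\<in>spins N. C m m)"

definition tpoly :: "nat \<Rightarrow> nat \<Rightarrow> int \<Rightarrow> fn4" where
  "tpoly N \<sigma> \<mu> = majorana N (tensor_op N \<sigma> \<mu>)"

definition d_lo1 :: "fn4 \<Rightarrow> fn4" where
  "d_lo1 p = (\<lambda>z1 z2 w1 w2. deriv (\<lambda>t. p t z2 w1 w2) z1)"
definition d_lo2 :: "fn4 \<Rightarrow> fn4" where
  "d_lo2 p = (\<lambda>z1 z2 w1 w2. deriv (\<lambda>t. p z1 t w1 w2) z2)"
definition d_up1 :: "fn4 \<Rightarrow> fn4" where
  "d_up1 p = (\<lambda>z1 z2 w1 w2. deriv (\<lambda>t. p z1 z2 t w2) w1)"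
definition d_up2 :: "fn4 \<Rightarrow> fn4" where
  "d_up2 p = (\<lambda>z1 z2 w1 w2. deriv (\<lambda>t. p z1 z2 w1 t) w2)"

definition Lop :: "nat \<Rightarrow> fn4 \<Rightarrow> fn4" where
  "Lop N p = (\<lambda>z1 z2 w1 w2. inverse (of_nat N ^ 2)
      * (d_lo1 (d_up1 p) z1 z2 w1 w2 + d_lo2 (d_up2 p) z1 z2 w1 w2))"

definition lcoef :: "nat \<Rightarrow> nat \<Rightarrow> real" where
  "lcoef N \<sigma> = sqrt (fact (N + \<sigma> + 1) * fact (N - \<sigma>) / fact (2 * \<sigma> + 1))
                 * fact \<sigma> / fact N"

end

theory Submission
  imports Defs
begin


lemma nat_1_plus_int[simp]: "nat (1 + int n) = Suc n" by arith

definition rf :: "int \<Rightarrow> real" where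
  "rf x = (if x < 0 then 0 else 1 / fact (nat x))"

definition mon :: "int \<Rightarrow> complex \<Rightarrow> complex" where
  "mon x z = complex_of_real (rf x) * z ^ nat x"

lemma rf_shift: "rf (x - 1) = of_int x * rf x"
proof (cases "x \<ge> 1")
  case True
  then obtain n where n: "x = int (Suc n)" by (intro that[of "nat (x-1)"]) simp
  then show ?thesis by (simp add: rf_def)
next
  case False
  then show ?thesis by (cases "x = 0") (auto simp: rf_def)
qed

lemma mon_deriv: "(mon x has_field_derivative mon (x - 1) z) (at z)"
proof (cases "x \<ge> 1")
  case True
  then obtain n where n: "x = int (Suc n)" by (intro that[of "nat (x-1)"]) simp
  have e: "mon (x-1) z = complex_of_real (rf x) * (of_nat (Suc n) * z ^ n)"
    using rf_shift[of x] n by (simp add: mon_def)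
  have "((\<lambda>z. z ^ Suc n) has_field_derivative of_nat (Suc n) * z ^ n) (at z)"
    using DERIV_power[OF DERIV_ident, of "Suc n" z] by simp
  from DERIV_cmult[OF this, of "complex_of_real (rf x)"]
  show ?thesis unfolding e unfolding mon_def n by simp
next
  case False
  then have "mon (x-1) z = 0" by (simp add: mon_def rf_def)
  moreover have "mon x = (\<lambda>z. complex_of_real (rf x))" using False by (auto simp: mon_def)
  ultimately show ?thesis by (auto intro!: derivative_eq_intros)
qed

lemma mon_mult: "z * mon (x - 1) z = of_int x * mon x z"
proof (cases "x \<ge> 1")
  case True
  then obtain n where n: "x = int (Suc n)" by (intro that[of "nat (x-1)"]) simp
  show ?thesis using rf_shift[of x] n by (simp add: mon_def)
next
  case False
  then show ?thesis by (cases "x = 0") (auto simp: mon_def rf_def)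
qed

definition Gs :: "nat \<Rightarrow> int \<Rightarrow> int \<Rightarrow> int \<Rightarrow> int \<Rightarrow> int \<Rightarrow> fn4" where
  "Gs \<sigma> \<mu> p q r s = (\<lambda>z1 z2 w1 w2. \<Sum>i\<le>\<sigma>. (-1) ^ i * mon (int \<sigma> - int i - p) z1 * mon (int i - q) z2
      * mon (int \<sigma> - \<mu> - int i - r) w1 * mon (\<mu> + int i - s) w2)"

lemma Gs_d1: "((\<lambda>t. Gs \<sigma> \<mu> p q r s t z2 w1 w2) has_field_derivative Gs \<sigma> \<mu> (p+1) q r s z1 z2 w1 w2) (at z1)"
proof -
  have "((\<lambda>t. Gs \<sigma> \<mu> p q r s t z2 w1 w2) has_field_derivative
     (\<Sum>i\<le>\<sigma>. (-1) ^ i * mon (int \<sigma> - int i - p - 1) z1 * mon (int i - q) z2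
      * mon (int \<sigma> - \<mu> - int i - r) w1 * mon (\<mu> + int i - s) w2)) (at z1)"
    unfolding Gs_def by (intro DERIV_sum DERIV_cmult_right DERIV_cmult mon_deriv)
  then show ?thesis by (simp add: Gs_def algebra_simps)
qed

lemma Gs_d2: "((\<lambda>t. Gs \<sigma> \<mu> p q r s z1 t w1 w2) has_field_derivative Gs \<sigma> \<mu> p (q+1) r s z1 z2 w1 w2) (at z2)"
proof -
  have "((\<lambda>t. Gs \<sigma> \<mu> p q r s z1 t w1 w2) has_field_derivative
     (\<Sum>i\<le>\<sigma>. (-1) ^ i * mon (int \<sigma> - int i - p) z1 * mon (int i - q - 1) z2
      * mon (int \<sigma> - \<mu> - int i - r) w1 * mon (\<mu> + int i - s) w2)) (at z2)"
    unfolding Gs_def by (intro DERIV_sum DERIV_cmult_right DERIV_cmult mon_deriv)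
  then show ?thesis by (simp add: Gs_def algebra_simps)
qed

lemma Gs_d3: "((\<lambda>t. Gs \<sigma> \<mu> p q r s z1 z2 t w2) has_field_derivative Gs \<sigma> \<mu> p q (r+1) s z1 z2 w1 w2) (at w1)"
proof -
  have "((\<lambda>t. Gs \<sigma> \<mu> p q r s z1 z2 t w2) has_field_derivative
     (\<Sum>i\<le>\<sigma>. (-1) ^ i * mon (int \<sigma> - int i - p) z1 * mon (int i - q) z2
      * mon (int \<sigma> - \<mu> - int i - r - 1) w1 * mon (\<mu> + int i - s) w2)) (at w1)"
    unfolding Gs_def by (intro DERIV_sum DERIV_cmult_right DERIV_cmult mon_deriv)
  then show ?thesis by (simp add: Gs_def algebra_simps)
qed

lemma Gs_d4: "((\<lambda>t. Gs \<sigma> \<mu> p q r s z1 z2 w1 t) has_field_derivative Gs \<sigma> \<mu> p q r (s+1) z1 z2 w1 w2) (at w2)"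
proof -
  have "((\<lambda>t. Gs \<sigma> \<mu> p q r s z1 z2 w1 t) has_field_derivative
     (\<Sum>i\<le>\<sigma>. (-1) ^ i * mon (int \<sigma> - int i - p) z1 * mon (int i - q) z2
      * mon (int \<sigma> - \<mu> - int i - r) w1 * mon (\<mu> + int i - s - 1) w2)) (at w2)"
    unfolding Gs_def by (intro DERIV_sum DERIV_cmult_right DERIV_cmult mon_deriv)
  then show ?thesis by (simp add: Gs_def algebra_simps)
qed

lemma Gs_euler_lo: "z1 * Gs \<sigma> \<mu> 1 0 0 0 z1 z2 w1 w2 + z2 * Gs \<sigma> \<mu> 0 1 0 0 z1 z2 w1 w2
   = of_nat \<sigma> * Gs \<sigma> \<mu> 0 0 0 0 z1 z2 w1 w2"
proof -
  have "z1 * ((-1) ^ i * mon (int \<sigma> - int i - 1) z1 * mon (int i) z2 * X)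
      + z2 * ((-1) ^ i * mon (int \<sigma> - int i) z1 * mon (int i - 1) z2 * X)
      = of_nat \<sigma> * ((-1) ^ i * mon (int \<sigma> - int i) z1 * mon (int i) z2 * X)" for i X
  proof -
    have a: "z1 * mon (int \<sigma> - int i - 1) z1 = of_int (int \<sigma> - int i) * mon (int \<sigma> - int i) z1"
      by (rule mon_mult)
    have b: "z2 * mon (int i - 1) z2 = of_int (int i) * mon (int i) z2"
      by (rule mon_mult)
    have "z1 * ((-1) ^ i * mon (int \<sigma> - int i - 1) z1 * mon (int i) z2 * X)
      + z2 * ((-1) ^ i * mon (int \<sigma> - int i) z1 * mon (int i - 1) z2 * X)
      = (z1 * mon (int \<sigma> - int i - 1) z1) * ((-1) ^ i * mon (int i) z2 * X)
       + (z2 * mon (int i - 1) z2) * ((-1) ^ i * mon (int \<sigma> - int i) z1 * X)"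
      by (simp add: algebra_simps)
    also have "\<dots> = (of_int (int \<sigma> - int i) + of_int (int i)) * ((-1) ^ i * mon (int \<sigma> - int i) z1 * mon (int i) z2 * X)"
      unfolding a b by (simp add: algebra_simps)
    finally show ?thesis by simp
  qed
  then show ?thesis unfolding Gs_def
    by (simp add: sum_distrib_left sum.distrib[symmetric] mult.assoc)
qed

lemma Gs_euler_up: "w1 * Gs \<sigma> \<mu> 0 0 1 0 z1 z2 w1 w2 + w2 * Gs \<sigma> \<mu> 0 0 0 1 z1 z2 w1 w2
   = of_nat \<sigma> * Gs \<sigma> \<mu> 0 0 0 0 z1 z2 w1 w2"
proof -
  have "w1 * (X * mon (int \<sigma> - \<mu> - int i - 1) w1 * mon (\<mu> + int i) w2)
      + w2 * (X * mon (int \<sigma> - \<mu> - int i) w1 * mon (\<mu> + int i - 1) w2)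
      = of_nat \<sigma> * (X * mon (int \<sigma> - \<mu> - int i) w1 * mon (\<mu> + int i) w2)" for i X
  proof -
    have a: "w1 * mon (int \<sigma> - \<mu> - int i - 1) w1 = of_int (int \<sigma> - \<mu> - int i) * mon (int \<sigma> - \<mu> - int i) w1"
      by (rule mon_mult)
    have b: "w2 * mon (\<mu> + int i - 1) w2 = of_int (\<mu> + int i) * mon (\<mu> + int i) w2"
      by (rule mon_mult)
    have "w1 * (X * mon (int \<sigma> - \<mu> - int i - 1) w1 * mon (\<mu> + int i) w2)
      + w2 * (X * mon (int \<sigma> - \<mu> - int i) w1 * mon (\<mu> + int i - 1) w2)
      = (w1 * mon (int \<sigma> - \<mu> - int i - 1) w1) * (X * mon (\<mu> + int i) w2)
       + (w2 * mon (\<mu> + int i - 1) w2) * (X * mon (int \<sigma> - \<mu> - int i) w1)"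
      by (simp add: algebra_simps)
    also have "\<dots> = (of_int (int \<sigma> - \<mu> - int i) + of_int (\<mu> + int i)) * (X * mon (int \<sigma> - \<mu> - int i) w1 * mon (\<mu> + int i) w2)"
      unfolding a b by (simp add: algebra_simps)
    finally show ?thesis by simp
  qed
  then show ?thesis unfolding Gs_def
    by (simp add: sum_distrib_left sum.distrib[symmetric])
qed

lemma mon_neg: "x < 0 \<Longrightarrow> mon x z = 0"
  by (simp add: mon_def rf_def)

lemma Gs_harm: "Gs \<sigma> \<mu> 1 0 1 0 z1 z2 w1 w2 + Gs \<sigma> \<mu> 0 1 0 1 z1 z2 w1 w2 = 0"
proof (cases \<sigma>)
  case 0
  then show ?thesis by (simp add: Gs_def mon_neg)
next
  case (Suc n)
  define T1 where "T1 i = (-1::complex) ^ i * mon (int \<sigma> - int i - 1) z1 * mon (int i - 0) z2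
      * mon (int \<sigma> - \<mu> - int i - 1) w1 * mon (\<mu> + int i - 0) w2" for i
  define T2 where "T2 i = (-1::complex) ^ i * mon (int \<sigma> - int i - 0) z1 * mon (int i - 1) z2
      * mon (int \<sigma> - \<mu> - int i - 0) w1 * mon (\<mu> + int i - 1) w2" for i
  have g1: "Gs \<sigma> \<mu> 1 0 1 0 z1 z2 w1 w2 = (\<Sum>i\<le>\<sigma>. T1 i)" unfolding Gs_def T1_def by simp
  have g2: "Gs \<sigma> \<mu> 0 1 0 1 z1 z2 w1 w2 = (\<Sum>i\<le>\<sigma>. T2 i)" unfolding Gs_def T2_def by simp
  have t20: "T2 0 = 0" by (simp add: T2_def mon_neg)
  have t1s: "T1 (Suc n) = 0" by (simp add: T1_def mon_neg Suc)
  have t2s: "T2 (Suc j) = - T1 j" for j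
    by (simp add: T1_def T2_def algebra_simps)
  have "(\<Sum>i\<le>\<sigma>. T2 i) = T2 0 + (\<Sum>j\<le>n. T2 (Suc j))" unfolding Suc by (rule sum.atMost_Suc_shift)
  also have "\<dots> = - (\<Sum>j\<le>n. T1 j)" by (simp add: t20 t2s sum_negf)
  finally have a: "(\<Sum>i\<le>\<sigma>. T2 i) = - (\<Sum>j\<le>n. T1 j)" .
  have b: "(\<Sum>i\<le>\<sigma>. T1 i) = (\<Sum>j\<le>n. T1 j)" unfolding Suc by (simp add: t1s)
  show ?thesis unfolding g1 g2 a b by simp
qed

lemma d_up1_uG: "d_up1 (\<lambda>z1 z2 w1 w2. c * (w1*z1+w2*z2)^n * Gs \<sigma> \<mu> 0 0 0 0 z1 z2 w1 w2)
  = (\<lambda>z1 z2 w1 w2. c * (of_nat n * (w1*z1+w2*z2)^(n-1) * z1 * Gs \<sigma> \<mu> 0 0 0 0 z1 z2 w1 w2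
        + (w1*z1+w2*z2)^n * Gs \<sigma> \<mu> 0 0 1 0 z1 z2 w1 w2))"
proof (intro ext)
  fix z1 z2 w1 w2 :: complex
  have "((\<lambda>t. c * (t*z1+w2*z2)^n * Gs \<sigma> \<mu> 0 0 0 0 z1 z2 t w2) has_field_derivative
     c * (of_nat n * (w1*z1+w2*z2)^(n-1) * z1 * Gs \<sigma> \<mu> 0 0 0 0 z1 z2 w1 w2
        + (w1*z1+w2*z2)^n * Gs \<sigma> \<mu> 0 0 1 0 z1 z2 w1 w2)) (at w1)"
    by (auto intro!: derivative_eq_intros Gs_d3 simp: algebra_simps)
  then show "d_up1 (\<lambda>z1 z2 w1 w2. c * (w1*z1+w2*z2)^n * Gs \<sigma> \<mu> 0 0 0 0 z1 z2 w1 w2) z1 z2 w1 w2 = 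
    c * (of_nat n * (w1*z1+w2*z2)^(n-1) * z1 * Gs \<sigma> \<mu> 0 0 0 0 z1 z2 w1 w2
        + (w1*z1+w2*z2)^n * Gs \<sigma> \<mu> 0 0 1 0 z1 z2 w1 w2)"
    unfolding d_up1_def by (rule DERIV_imp_deriv)
qed

lemma d_up2_uG: "d_up2 (\<lambda>z1 z2 w1 w2. c * (w1*z1+w2*z2)^n * Gs \<sigma> \<mu> 0 0 0 0 z1 z2 w1 w2)
  = (\<lambda>z1 z2 w1 w2. c * (of_nat n * (w1*z1+w2*z2)^(n-1) * z2 * Gs \<sigma> \<mu> 0 0 0 0 z1 z2 w1 w2
        + (w1*z1+w2*z2)^n * Gs \<sigma> \<mu> 0 0 0 1 z1 z2 w1 w2))"
proof (intro ext)
  fix z1 z2 w1 w2 :: complex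
  have "((\<lambda>t. c * (w1*z1+t*z2)^n * Gs \<sigma> \<mu> 0 0 0 0 z1 z2 w1 t) has_field_derivative
     c * (of_nat n * (w1*z1+w2*z2)^(n-1) * z2 * Gs \<sigma> \<mu> 0 0 0 0 z1 z2 w1 w2
        + (w1*z1+w2*z2)^n * Gs \<sigma> \<mu> 0 0 0 1 z1 z2 w1 w2)) (at w2)"
    by (auto intro!: derivative_eq_intros Gs_d4 simp: algebra_simps)
  then show "d_up2 (\<lambda>z1 z2 w1 w2. c * (w1*z1+w2*z2)^n * Gs \<sigma> \<mu> 0 0 0 0 z1 z2 w1 w2) z1 z2 w1 w2 = 
    c * (of_nat n * (w1*z1+w2*z2)^(n-1) * z2 * Gs \<sigma> \<mu> 0 0 0 0 z1 z2 w1 w2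
        + (w1*z1+w2*z2)^n * Gs \<sigma> \<mu> 0 0 0 1 z1 z2 w1 w2)"
    unfolding d_up2_def by (rule DERIV_imp_deriv)
qed

lemma d_lo1_uG: "d_lo1 (\<lambda>z1 z2 w1 w2. c * (of_nat n * (w1*z1+w2*z2)^(n-1) * z1 * Gs \<sigma> \<mu> 0 0 0 0 z1 z2 w1 w2
        + (w1*z1+w2*z2)^n * Gs \<sigma> \<mu> 0 0 1 0 z1 z2 w1 w2)) z1 z2 w1 w2
  = c * (of_nat n * of_nat (n-1) * (w1*z1+w2*z2)^(n-2) * w1 * z1 * Gs \<sigma> \<mu> 0 0 0 0 z1 z2 w1 w2
        + of_nat n * (w1*z1+w2*z2)^(n-1) * Gs \<sigma> \<mu> 0 0 0 0 z1 z2 w1 w2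
        + of_nat n * (w1*z1+w2*z2)^(n-1) * (z1 * Gs \<sigma> \<mu> 1 0 0 0 z1 z2 w1 w2)
        + of_nat n * (w1*z1+w2*z2)^(n-1) * (w1 * Gs \<sigma> \<mu> 0 0 1 0 z1 z2 w1 w2)
        + (w1*z1+w2*z2)^n * Gs \<sigma> \<mu> 1 0 1 0 z1 z2 w1 w2)"
proof -
  have "((\<lambda>t. c * (of_nat n * (w1*t+w2*z2)^(n-1) * t * Gs \<sigma> \<mu> 0 0 0 0 t z2 w1 w2
        + (w1*t+w2*z2)^n * Gs \<sigma> \<mu> 0 0 1 0 t z2 w1 w2)) has_field_derivative
     c * (of_nat n * of_nat (n-1) * (w1*z1+w2*z2)^(n-2) * w1 * z1 * Gs \<sigma> \<mu> 0 0 0 0 z1 z2 w1 w2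
        + of_nat n * (w1*z1+w2*z2)^(n-1) * Gs \<sigma> \<mu> 0 0 0 0 z1 z2 w1 w2
        + of_nat n * (w1*z1+w2*z2)^(n-1) * (z1 * Gs \<sigma> \<mu> 1 0 0 0 z1 z2 w1 w2)
        + of_nat n * (w1*z1+w2*z2)^(n-1) * (w1 * Gs \<sigma> \<mu> 0 0 1 0 z1 z2 w1 w2)
        + (w1*z1+w2*z2)^n * Gs \<sigma> \<mu> 1 0 1 0 z1 z2 w1 w2)) (at z1)"
    apply (rule DERIV_cong)
     apply (rule derivative_eq_intros Gs_d1 refl)+
    apply (simp add: numeral_2_eq_2)
    apply (simp add: algebra_simps)
    done
  then show ?thesis unfolding d_lo1_def by (rule DERIV_imp_deriv)
qed

lemma d_lo2_uG: "d_lo2 (\<lambda>z1 z2 w1 w2. c * (of_nat n * (w1*z1+w2*z2)^(n-1) * z2 * Gs \<sigma> \<mu> 0 0 0 0 z1 z2 w1 w2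
        + (w1*z1+w2*z2)^n * Gs \<sigma> \<mu> 0 0 0 1 z1 z2 w1 w2)) z1 z2 w1 w2
  = c * (of_nat n * of_nat (n-1) * (w1*z1+w2*z2)^(n-2) * w2 * z2 * Gs \<sigma> \<mu> 0 0 0 0 z1 z2 w1 w2
        + of_nat n * (w1*z1+w2*z2)^(n-1) * Gs \<sigma> \<mu> 0 0 0 0 z1 z2 w1 w2
        + of_nat n * (w1*z1+w2*z2)^(n-1) * (z2 * Gs \<sigma> \<mu> 0 1 0 0 z1 z2 w1 w2)
        + of_nat n * (w1*z1+w2*z2)^(n-1) * (w2 * Gs \<sigma> \<mu> 0 0 0 1 z1 z2 w1 w2)
        + (w1*z1+w2*z2)^n * Gs \<sigma> \<mu> 0 1 0 1 z1 z2 w1 w2)"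
proof -
  have "((\<lambda>t. c * (of_nat n * (w1*z1+w2*t)^(n-1) * t * Gs \<sigma> \<mu> 0 0 0 0 z1 t w1 w2
        + (w1*z1+w2*t)^n * Gs \<sigma> \<mu> 0 0 0 1 z1 t w1 w2)) has_field_derivative
     c * (of_nat n * of_nat (n-1) * (w1*z1+w2*z2)^(n-2) * w2 * z2 * Gs \<sigma> \<mu> 0 0 0 0 z1 z2 w1 w2
        + of_nat n * (w1*z1+w2*z2)^(n-1) * Gs \<sigma> \<mu> 0 0 0 0 z1 z2 w1 w2
        + of_nat n * (w1*z1+w2*z2)^(n-1) * (z2 * Gs \<sigma> \<mu> 0 1 0 0 z1 z2 w1 w2)
        + of_nat n * (w1*z1+w2*z2)^(n-1) * (w2 * Gs \<sigma> \<mu> 0 0 0 1 z1 z2 w1 w2)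
        + (w1*z1+w2*z2)^n * Gs \<sigma> \<mu> 0 1 0 1 z1 z2 w1 w2)) (at z2)"
    apply (rule DERIV_cong)
     apply (rule derivative_eq_intros Gs_d2 refl)+
    apply (simp add: numeral_2_eq_2)
    apply (simp add: algebra_simps)
    done
  then show ?thesis unfolding d_lo2_def by (rule DERIV_imp_deriv)
qed

lemma pow_pred2: "of_nat n * of_nat (n-1) * (u::complex)^(n-2) * u = of_nat n * of_nat (n-1) * u^(n-1)"
proof (cases n)
  case 0 then show ?thesis by simp
next
  case (Suc m) then show ?thesis by (cases m) auto
qed

lemma Lop_uG: "Lop N (\<lambda>z1 z2 w1 w2. c * (w1*z1+w2*z2)^n * Gs \<sigma> \<mu> 0 0 0 0 z1 z2 w1 w2)
  = (\<lambda>z1 z2 w1 w2. inverse (of_nat N ^ 2) * (c * of_nat (n * (n + 1 + 2 * \<sigma>)) * (w1*z1+w2*z2)^(n-1)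
        * Gs \<sigma> \<mu> 0 0 0 0 z1 z2 w1 w2))"
proof (intro ext)
  fix z1 z2 w1 w2 :: complex
  define u where "u = w1*z1+w2*z2"
  define G where "G = Gs \<sigma> \<mu> 0 0 0 0 z1 z2 w1 w2"
  have e1: "z1 * Gs \<sigma> \<mu> 1 0 0 0 z1 z2 w1 w2 + z2 * Gs \<sigma> \<mu> 0 1 0 0 z1 z2 w1 w2 = of_nat \<sigma> * G"
    unfolding G_def by (rule Gs_euler_lo)
  have e2: "w1 * Gs \<sigma> \<mu> 0 0 1 0 z1 z2 w1 w2 + w2 * Gs \<sigma> \<mu> 0 0 0 1 z1 z2 w1 w2 = of_nat \<sigma> * G"
    unfolding G_def by (rule Gs_euler_up)
  have h: "Gs \<sigma> \<mu> 1 0 1 0 z1 z2 w1 w2 + Gs \<sigma> \<mu> 0 1 0 1 z1 z2 w1 w2 = 0" by (rule Gs_harm)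
  have p2: "of_nat n * of_nat (n-1) * u^(n-2) * u = of_nat n * of_nat (n-1) * u^(n-1)" by (rule pow_pred2)
  have "d_lo1 (d_up1 (\<lambda>z1 z2 w1 w2. c * (w1*z1+w2*z2)^n * Gs \<sigma> \<mu> 0 0 0 0 z1 z2 w1 w2)) z1 z2 w1 w2
      + d_lo2 (d_up2 (\<lambda>z1 z2 w1 w2. c * (w1*z1+w2*z2)^n * Gs \<sigma> \<mu> 0 0 0 0 z1 z2 w1 w2)) z1 z2 w1 w2
    = c * (of_nat n * of_nat (n-1) * u^(n-2) * u * G + 2 * of_nat n * u^(n-1) * G
       + of_nat n * u^(n-1) * (z1 * Gs \<sigma> \<mu> 1 0 0 0 z1 z2 w1 w2 + z2 * Gs \<sigma> \<mu> 0 1 0 0 z1 z2 w1 w2)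
       + of_nat n * u^(n-1) * (w1 * Gs \<sigma> \<mu> 0 0 1 0 z1 z2 w1 w2 + w2 * Gs \<sigma> \<mu> 0 0 0 1 z1 z2 w1 w2)
       + u^n * (Gs \<sigma> \<mu> 1 0 1 0 z1 z2 w1 w2 + Gs \<sigma> \<mu> 0 1 0 1 z1 z2 w1 w2))"
    unfolding d_up1_uG d_up2_uG d_lo1_uG d_lo2_uG u_def G_def by (simp add: algebra_simps)
  also have "\<dots> = c * (of_nat n * of_nat (n-1) * u^(n-1) * G + 2 * of_nat n * u^(n-1) * G
       + of_nat n * u^(n-1) * (of_nat \<sigma> * G) + of_nat n * u^(n-1) * (of_nat \<sigma> * G))"
    unfolding e1 e2 h p2 by simp
  also have "\<dots> = c * of_nat (n * (n + 1 + 2 * \<sigma>)) * u^(n-1) * G"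
  proof (cases n)
    case 0 then show ?thesis by simp
  next
    case (Suc m) then show ?thesis by (simp add: algebra_simps)
  qed
  finally show "Lop N (\<lambda>z1 z2 w1 w2. c * (w1*z1+w2*z2)^n * Gs \<sigma> \<mu> 0 0 0 0 z1 z2 w1 w2) z1 z2 w1 w2
    = inverse (of_nat N ^ 2) * (c * of_nat (n * (n + 1 + 2 * \<sigma>)) * (w1*z1+w2*z2)^(n-1)
        * Gs \<sigma> \<mu> 0 0 0 0 z1 z2 w1 w2)"
    unfolding Lop_def u_def G_def by simp
qed

lemma spins_image: "spins M = (\<lambda>b. int M - 2 * int b) ` {..M}"
proof
  show "spins M \<subseteq> (\<lambda>b. int M - 2 * int b) ` {..M}"
  proof
    fix m assume "m \<in> spins M"
    then have m: "- int M \<le> m" "m \<le> int M" "even (int M + m)" by (auto simp: spins_def)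
    have "even (int M - m)" using m(3) by presburger
    define t where "t = (int M - m) div 2"
    have t: "int M - m = 2 * t" using \<open>even (int M - m)\<close> unfolding t_def by simp
    have "t \<ge> 0" "t \<le> int M" using t m by auto
    then show "m \<in> (\<lambda>b. int M - 2 * int b) ` {..M}"
      using t by (intro image_eqI[of _ _ "nat t"]) auto
  qed
next
  show "(\<lambda>b. int M - 2 * int b) ` {..M} \<subseteq> spins M"
    by (auto simp: spins_def)
qed

lemma sum_spins: "(\<Sum>m\<in>spins M. f m) = (\<Sum>b\<le>M. f (int M - 2 * int b))"
proof -
  have "inj_on (\<lambda>b. int M - 2 * int b) {..M}" by (auto simp: inj_on_def)
  then show ?thesis unfolding spins_image by (simp add: sum.reindex)
qed

lemma half_2: "half (2 * int b) = b" by (simp add: half_def)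
lemma half_M1: "b \<le> M \<Longrightarrow> half (int M + (int M - 2 * int b)) = M - b" by (simp add: half_def) 
lemma half_M1': "b \<le> M \<Longrightarrow> half (2 * int M - 2 * int b) = M - b" by (simp add: half_def) 
lemma half_M2: "half (int M - (int M - 2 * int b)) = b" by (simp add: half_def)

lemma maj_bd: "majorana M C z1 z2 w1 w2 = (\<Sum>b\<le>M. \<Sum>d\<le>M.
   ((-1)^b * complex_of_real (sqrt (real (M choose b))) * z1^(M-b) * z2^b) * C (int M - 2*int b) (int M - 2*int d)
   * ((-1)^d * complex_of_real (sqrt (real (M choose d))) * w1^(M-d) * w2^d))"
  unfolding majorana_def sum_spins
  by (intro sum.cong refl) (simp add: half_M1 half_M2 half_M1' half_2)

lemma ifact2_eq: "x = 2 * y \<Longrightarrow> ifact2 x = rf y"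
  by (simp add: ifact2_def rf_def half_def)

lemma fact2_eq: "x = 2 * int y \<Longrightarrow> fact2 x = fact y"
  by (simp add: fact2_def half_def)

lemma tensor_bd: "tensor_op N \<sigma> \<mu> (int N - 2*int b) (int N - 2*int d)
   = (-1)^d * complex_of_real (cg (int N) (int N - 2*int b) (int N) (2*int d - int N) (2*int \<sigma>) (2*\<mu>))"
  by (simp add: tensor_op_def half_M2 half_2)

lemma cg_zero: "int d \<noteq> int b + \<mu> \<Longrightarrow> cg (int N) (int N - 2*int b) (int N) (2*int d - int N) (2*int \<sigma>) (2*\<mu>) = 0"
  by (simp add: cg_def)

definition Acoef :: "nat \<Rightarrow> nat \<Rightarrow> real" where
  "Acoef N \<sigma> = sqrt (real_of_int (2 * int \<sigma> + 1) * fact \<sigma> * fact \<sigma> * fact (N - \<sigma>) / fact (N + \<sigma> + 1))"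

lemma cg_spec:
  assumes "\<sigma> \<le> N" "\<bar>\<mu>\<bar> \<le> int \<sigma>" "b \<le> N" "d \<le> N" "int d = int b + \<mu>"
  shows "cg (int N) (int N - 2*int b) (int N) (2*int d - int N) (2*int \<sigma>) (2*\<mu>)
    = Acoef N \<sigma> * sqrt (fact (nat (int \<sigma> + \<mu>)) * fact (nat (int \<sigma> - \<mu>)) * fact b * fact (N - b) * fact (N - d) * fact d)
      * (\<Sum>k\<le>N. (-1)^k * rf (int k) * rf (int N - int \<sigma> - int k) * rf (int b - int k) * rf (int d - int k)
           * rf (int \<sigma> - int b + int k) * rf (int \<sigma> - int d + int k))"
proof -
  have cond: "0 \<le> int N \<and> 0 \<le> int N \<and> 0 \<le> 2 * int \<sigma> \<and> \<bar>int N - 2 * int b\<bar> \<le> int N \<and> \<bar>2 * int d - int N\<bar> \<le> int N \<and> \<bar>2 * \<mu>\<bar> \<le> 2 * int \<sigma>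
        \<and> even (int N + (int N - 2 * int b)) \<and> even (int N + (2 * int d - int N)) \<and> even (2 * int \<sigma> + 2 * \<mu>) \<and> even (int N + int N + 2 * int \<sigma>)
        \<and> \<bar>int N - int N\<bar> \<le> 2 * int \<sigma> \<and> 2 * int \<sigma> \<le> int N + int N \<and> 2 * \<mu> = int N - 2 * int b + (2 * int d - int N)"
    using assms by auto
  have f1: "fact2 (2 * int \<sigma> + int N - int N) = fact \<sigma>" by (rule fact2_eq) simp
  have f2: "fact2 (2 * int \<sigma> - int N + int N) = fact \<sigma>" by (rule fact2_eq) simp
  have f3: "fact2 (int N + int N - 2 * int \<sigma>) = fact (N - \<sigma>)" by (rule fact2_eq) (use assms in simp)
  have f4: "fact2 (int N + int N + 2 * int \<sigma> + 2) = fact (N + \<sigma> + 1)" by (rule fact2_eq) simp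
  have f5: "fact2 (2 * int \<sigma> + 2 * \<mu>) = fact (nat (int \<sigma> + \<mu>))" by (rule fact2_eq) (use assms in simp)
  have f6: "fact2 (2 * int \<sigma> - 2 * \<mu>) = fact (nat (int \<sigma> - \<mu>))" by (rule fact2_eq) (use assms in simp)
  have f7: "fact2 (int N - (int N - 2 * int b)) = fact b" by (rule fact2_eq) simp
  have f8: "fact2 (int N + (int N - 2 * int b)) = fact (N - b)" by (rule fact2_eq) (use assms in simp)
  have f9: "fact2 (int N - (2 * int d - int N)) = fact (N - d)" by (rule fact2_eq) (use assms in simp)
  have f10: "fact2 (int N + (2 * int d - int N)) = fact d" by (rule fact2_eq) simp
  have hN: "half (int N + int N) = N" by (simp add: half_def)
  have S: "ifact2 (2 * int k) * ifact2 (int N + int N - 2 * int \<sigma> - 2 * int k) * ifact2 (int N - (int N - 2 * int b) - 2 * int k)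
     * ifact2 (int N + (2 * int d - int N) - 2 * int k) * ifact2 (2 * int \<sigma> - int N + (int N - 2 * int b) + 2 * int k)
     * ifact2 (2 * int \<sigma> - int N - (2 * int d - int N) + 2 * int k)
     = rf (int k) * rf (int N - int \<sigma> - int k) * rf (int b - int k) * rf (int d - int k)
           * rf (int \<sigma> - int b + int k) * rf (int \<sigma> - int d + int k)" for k
  proof -
    have "ifact2 (2 * int k) = rf (int k)" by (rule ifact2_eq) simp
    moreover have "ifact2 (int N + int N - 2 * int \<sigma> - 2 * int k) = rf (int N - int \<sigma> - int k)" by (rule ifact2_eq) simp
    moreover have "ifact2 (int N - (int N - 2 * int b) - 2 * int k) = rf (int b - int k)" by (rule ifact2_eq) simp
    moreover have "ifact2 (int N + (2 * int d - int N) - 2 * int k) = rf (int d - int k)" by (rule ifact2_eq) simp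
    moreover have "ifact2 (2 * int \<sigma> - int N + (int N - 2 * int b) + 2 * int k) = rf (int \<sigma> - int b + int k)" by (rule ifact2_eq) simp
    moreover have "ifact2 (2 * int \<sigma> - int N - (2 * int d - int N) + 2 * int k) = rf (int \<sigma> - int d + int k)" by (rule ifact2_eq) simp
    ultimately show ?thesis by simp
  qed
  have "cg (int N) (int N - 2*int b) (int N) (2*int d - int N) (2*int \<sigma>) (2*\<mu>)
    = sqrt (real_of_int (2 * int \<sigma> + 1) * fact2 (2 * int \<sigma> + int N - int N) * fact2 (2 * int \<sigma> - int N + int N)
                  * fact2 (int N + int N - 2 * int \<sigma>) / fact2 (int N + int N + 2 * int \<sigma> + 2))
        * sqrt (fact2 (2 * int \<sigma> + 2 * \<mu>) * fact2 (2 * int \<sigma> - 2 * \<mu>) * fact2 (int N - (int N - 2 * int b)) * fact2 (int N + (int N - 2 * int b))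
                  * fact2 (int N - (2 * int d - int N)) * fact2 (int N + (2 * int d - int N)))
        * (\<Sum>k\<in>{0..half (int N + int N)}. (-1) ^ k
             * ifact2 (2 * int k) * ifact2 (int N + int N - 2 * int \<sigma> - 2 * int k)
             * ifact2 (int N - (int N - 2 * int b) - 2 * int k) * ifact2 (int N + (2 * int d - int N) - 2 * int k)
             * ifact2 (2 * int \<sigma> - int N + (int N - 2 * int b) + 2 * int k) * ifact2 (2 * int \<sigma> - int N - (2 * int d - int N) + 2 * int k))"
    unfolding cg_def by (rule if_P[OF cond])
  also have "\<dots> = Acoef N \<sigma> * sqrt (fact (nat (int \<sigma> + \<mu>)) * fact (nat (int \<sigma> - \<mu>)) * fact b * fact (N - b) * fact (N - d) * fact d)
      * (\<Sum>k\<le>N. (-1)^k * (ifact2 (2 * int k) * ifact2 (int N + int N - 2 * int \<sigma> - 2 * int k) * ifact2 (int N - (int N - 2 * int b) - 2 * int k)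
     * ifact2 (int N + (2 * int d - int N) - 2 * int k) * ifact2 (2 * int \<sigma> - int N + (int N - 2 * int b) + 2 * int k)
     * ifact2 (2 * int \<sigma> - int N - (2 * int d - int N) + 2 * int k)))"
    unfolding f1 f2 f3 f4 f5 f6 f7 f8 f9 f10 hN Acoef_def atLeast0AtMost by (simp add: mult.assoc)
  also have "\<dots> = Acoef N \<sigma> * sqrt (fact (nat (int \<sigma> + \<mu>)) * fact (nat (int \<sigma> - \<mu>)) * fact b * fact (N - b) * fact (N - d) * fact d)
      * (\<Sum>k\<le>N. (-1)^k * (rf (int k) * rf (int N - int \<sigma> - int k) * rf (int b - int k) * rf (int d - int k)
           * rf (int \<sigma> - int b + int k) * rf (int \<sigma> - int d + int k)))"
    unfolding S ..
  finally show ?thesis by (simp add: mult.assoc)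
qed

lemma rf_nat: "rf (int x) = 1 / fact x" by (simp add: rf_def)

lemma sqrt_binom_fact: "b \<le> N \<Longrightarrow> sqrt (real (N choose b)) * sqrt (fact b * fact (N - b)) = sqrt (fact N)"
proof -
  assume "b \<le> N"
  then have "fact b * fact (N - b) * (N choose b) = fact N" by (rule binomial_fact_lemma)
  then have "real (N choose b) * (fact b * fact (N - b)) = fact N"
    by (metis (mono_tags, lifting) mult.commute of_nat_fact of_nat_mult)
  then show ?thesis by (metis real_sqrt_mult)
qed

lemma coef_sqrt: assumes "b \<le> N" "d \<le> N" "B \<ge> 0"
  shows "sqrt (real (N choose b)) * sqrt (real (N choose d)) * sqrt (B * fact b * fact (N - b) * fact (N - d) * fact d)
     = fact N * sqrt B"
proof -
  have "sqrt (B * fact b * fact (N - b) * fact (N - d) * fact d) = sqrt B * sqrt (fact b * fact (N - b)) * sqrt (fact d * fact (N - d))"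
    by (simp add: real_sqrt_mult[symmetric] mult_ac)
  then have "sqrt (real (N choose b)) * sqrt (real (N choose d)) * sqrt (B * fact b * fact (N - b) * fact (N - d) * fact d)
     = sqrt B * (sqrt (real (N choose b)) * sqrt (fact b * fact (N - b))) * (sqrt (real (N choose d)) * sqrt (fact d * fact (N - d)))"
    by (simp add: mult_ac)
  also have "\<dots> = sqrt B * sqrt (fact N) * sqrt (fact N)"
    using sqrt_binom_fact[OF assms(1)] sqrt_binom_fact[OF assms(2)] by simp
  also have "\<dots> = fact N * sqrt B" by (simp add: mult_ac)
  finally show ?thesis .
qed

definition Kc :: "nat \<Rightarrow> nat \<Rightarrow> int \<Rightarrow> real" where
  "Kc N \<sigma> \<mu> = fact N * Acoef N \<sigma> * sqrt (fact (nat (int \<sigma> + \<mu>)) * fact (nat (int \<sigma> - \<mu>))) / fact (N - \<sigma>)"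

definition Tm :: "nat \<Rightarrow> int \<Rightarrow> complex \<Rightarrow> complex \<Rightarrow> complex \<Rightarrow> complex \<Rightarrow> nat \<Rightarrow> complex" where
  "Tm \<sigma> \<mu> z1 z2 w1 w2 i = (-1) ^ i * mon (int \<sigma> - int i) z1 * mon (int i) z2
      * mon (int \<sigma> - \<mu> - int i) w1 * mon (\<mu> + int i) w2"

lemma Gs0: "Gs \<sigma> \<mu> 0 0 0 0 z1 z2 w1 w2 = (\<Sum>i\<le>\<sigma>. Tm \<sigma> \<mu> z1 z2 w1 w2 i)"
  by (simp add: Gs_def Tm_def)

context
  fixes N \<sigma> :: nat and \<mu> :: int and z1 z2 w1 w2 :: complex
  assumes sN: "\<sigma> \<le> N" and mus: "\<bar>\<mu>\<bar> \<le> int \<sigma>"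
begin

definition Rk :: "nat \<Rightarrow> nat \<Rightarrow> nat \<Rightarrow> real" where
  "Rk b d k = rf (int k) * rf (int N - int \<sigma> - int k) * rf (int b - int k) * rf (int d - int k)
           * rf (int \<sigma> - int b + int k) * rf (int \<sigma> - int d + int k)"

definition Bp :: real where "Bp = fact (nat (int \<sigma> + \<mu>)) * fact (nat (int \<sigma> - \<mu>))"

definition Yt :: "nat \<Rightarrow> nat \<Rightarrow> nat \<Rightarrow> complex" where
  "Yt b d k = ((-1)^b * complex_of_real (sqrt (real (N choose b))) * z1^(N-b) * z2^b)
     * ((-1)^d * complex_of_real (Acoef N \<sigma> * sqrt (Bp * fact b * fact (N - b) * fact (N - d) * fact d) * ((-1)^k * Rk b d k)))
     * ((-1)^d * complex_of_real (sqrt (real (N choose d))) * w1^(N-d) * w2^d)"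

lemma term_eq:
  assumes b: "b \<le> N" and k: "k \<le> N" and d: "int d = int b + \<mu>" "d \<le> N"
  shows "Yt b d k = complex_of_real (Kc N \<sigma> \<mu>) * (if k \<le> N - \<sigma> \<and> k \<le> b \<and> b \<le> k + \<sigma>
      then of_nat ((N - \<sigma>) choose k) * (z1*w1)^(N-\<sigma>-k) * (z2*w2)^k * Tm \<sigma> \<mu> z1 z2 w1 w2 (b - k) else 0)"
proof (cases "k \<le> N - \<sigma> \<and> k \<le> b \<and> b \<le> k + \<sigma>")
  case False
  then have "Rk b d k = 0" unfolding Rk_def by (auto simp: rf_def)
  then show ?thesis unfolding if_not_P[OF False] by (simp add: Yt_def)
next
  case True
  then obtain i where i: "b = k + i" "i \<le> \<sigma>" by (intro that[of "b - k"]) auto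
  have bk: "b - k = i" using i by simp
  show ?thesis
  proof (cases "d < k \<or> int \<sigma> - int d + int k < 0")
    case True
    then have "Rk b d k = 0" unfolding Rk_def by (auto simp: rf_def)
    moreover have "Tm \<sigma> \<mu> z1 z2 w1 w2 i = 0"
      using True d i by (auto simp: Tm_def mon_neg)
    ultimately show ?thesis by (simp add: Yt_def bk)
  next
    case False
    then obtain j where j: "d = k + j" "j \<le> \<sigma>" by (intro that[of "d - k"]) auto
    have mu: "\<mu> = int j - int i" using d i j by simp
    have kn: "k \<le> N - \<sigma>" using True by simp
    have Rk: "Rk b d k = 1 / fact k * (1 / fact (N - \<sigma> - k)) * (1 / fact i) * (1 / fact j) * (1 / fact (\<sigma> - i)) * (1 / fact (\<sigma> - j))"
    proof -
      have e1: "int N - int \<sigma> - int k = int (N - \<sigma> - k)" using kn sN by simp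
      have e2: "int b - int k = int i" "int d - int k = int j" using i j by auto
      have e3: "int \<sigma> - int b + int k = int (\<sigma> - i)" "int \<sigma> - int d + int k = int (\<sigma> - j)" using i j by auto
      show ?thesis unfolding Rk_def e1 e2 e3 rf_nat by simp
    qed
    have Tm: "Tm \<sigma> \<mu> z1 z2 w1 w2 i = (-1)^i * complex_of_real (1 / fact (\<sigma> - i) * (1 / fact i) * (1 / fact (\<sigma> - j)) * (1 / fact j))
        * (z1^(\<sigma> - i) * z2^i * w1^(\<sigma> - j) * w2^j)"
    proof -
      have e: "int \<sigma> - int i = int (\<sigma> - i)" "int \<sigma> - \<mu> - int i = int (\<sigma> - j)" "\<mu> + int i = int j"
        using i j mu by auto
      show ?thesis unfolding Tm_def mon_def e rf_nat nat_int by (simp add: mult_ac)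
    qed
    have cs: "sqrt (real (N choose b)) * sqrt (real (N choose d)) * sqrt (Bp * fact b * fact (N - b) * fact (N - d) * fact d)
       = fact N * sqrt Bp" by (rule coef_sqrt) (use b d in \<open>auto simp: Bp_def\<close>)
    have sign: "(-1::complex)^b * (-1)^d * (-1)^d * (-1)^k = (-1)^i"
    proof -
      have "(-1::complex)^b * (-1)^d * (-1)^d * (-1)^k = (-1)^(i + 2*k + 2*d)"
        unfolding i(1) by (simp add: power_add power_mult_distrib mult_ac)
      also have "\<dots> = (-1)^i" by (simp add: power_add power_mult)
      finally show ?thesis .
    qed
    have mono: "z1^(N-b) * z2^b * w1^(N-d) * w2^d = (z1*w1)^(N-\<sigma>-k) * (z2*w2)^k * (z1^(\<sigma> - i) * z2^i * w1^(\<sigma> - j) * w2^j)"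
    proof -
      have "N - b = (N - \<sigma> - k) + (\<sigma> - i)" "N - d = (N - \<sigma> - k) + (\<sigma> - j)" using i j kn sN by auto
      then show ?thesis unfolding i(1) j(1) by (simp add: power_add power_mult_distrib mult_ac)
    qed
    have coef: "fact N * sqrt Bp * Acoef N \<sigma> * (1 / fact k * (1 / fact (N - \<sigma> - k)) * (1 / fact i) * (1 / fact j) * (1 / fact (\<sigma> - i)) * (1 / fact (\<sigma> - j)))
       = Kc N \<sigma> \<mu> * real ((N - \<sigma>) choose k) * (1 / fact (\<sigma> - i) * (1 / fact i) * (1 / fact (\<sigma> - j)) * (1 / fact j))"
    proof -
      have "fact k * fact (N - \<sigma> - k) * real ((N - \<sigma>) choose k) = fact (N - \<sigma>)"
        using binomial_fact_lemma[OF kn] by (metis of_nat_fact of_nat_mult)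
      then have "real ((N - \<sigma>) choose k) = fact (N - \<sigma>) / (fact k * fact (N - \<sigma> - k))"
        by (simp add: field_simps)
      then show ?thesis unfolding Kc_def Bp_def by (simp add: field_simps)
    qed
    have "Yt b d k = ((-1)^b * (-1)^d * (-1)^d * (-1)^k) * complex_of_real (sqrt (real (N choose b)) * sqrt (real (N choose d)) * sqrt (Bp * fact b * fact (N - b) * fact (N - d) * fact d) * Acoef N \<sigma> * Rk b d k)
        * (z1^(N-b) * z2^b * w1^(N-d) * w2^d)"
      unfolding Yt_def by (simp add: mult_ac)
    also have "\<dots> = (-1)^i * complex_of_real (fact N * sqrt Bp * Acoef N \<sigma> * (1 / fact k * (1 / fact (N - \<sigma> - k)) * (1 / fact i) * (1 / fact j) * (1 / fact (\<sigma> - i)) * (1 / fact (\<sigma> - j))))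
        * ((z1*w1)^(N-\<sigma>-k) * (z2*w2)^k * (z1^(\<sigma> - i) * z2^i * w1^(\<sigma> - j) * w2^j))"
      unfolding sign cs mono Rk ..
    also have "\<dots> = (-1)^i * complex_of_real (Kc N \<sigma> \<mu> * real ((N - \<sigma>) choose k) * (1 / fact (\<sigma> - i) * (1 / fact i) * (1 / fact (\<sigma> - j)) * (1 / fact j)))
        * ((z1*w1)^(N-\<sigma>-k) * (z2*w2)^k * (z1^(\<sigma> - i) * z2^i * w1^(\<sigma> - j) * w2^j))"
      unfolding coef ..
    also have "\<dots> = complex_of_real (Kc N \<sigma> \<mu>) * (of_nat ((N - \<sigma>) choose k) * (z1*w1)^(N-\<sigma>-k) * (z2*w2)^k * Tm \<sigma> \<mu> z1 z2 w1 w2 i)"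
      unfolding Tm by (simp add: mult_ac)
    finally show ?thesis using True bk by simp
  qed
qed


lemma term_zero:
  assumes b: "b \<le> N" and inv: "\<not> (0 \<le> int b + \<mu> \<and> int b + \<mu> \<le> int N)"
    and c: "k \<le> N - \<sigma>" "k \<le> b" "b \<le> k + \<sigma>"
  shows "Tm \<sigma> \<mu> z1 z2 w1 w2 (b - k) = 0"
proof (cases "int b + \<mu> < 0")
  case True
  then have "\<mu> + int (b - k) < 0" using c by simp
  then show ?thesis by (simp add: Tm_def mon_neg)
next
  case False
  then have "int \<sigma> - \<mu> - int (b - k) < 0" using inv c sN by auto
  then show ?thesis by (simp add: Tm_def mon_neg)
qed

lemma inner_d:
  assumes b: "b \<le> N"
  shows "(\<Sum>d\<le>N. ((-1)^b * complex_of_real (sqrt (real (N choose b))) * z1^(N-b) * z2^b)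
      * tensor_op N \<sigma> \<mu> (int N - 2*int b) (int N - 2*int d)
      * ((-1)^d * complex_of_real (sqrt (real (N choose d))) * w1^(N-d) * w2^d))
    = (\<Sum>k\<le>N. complex_of_real (Kc N \<sigma> \<mu>) * (if k \<le> N - \<sigma> \<and> k \<le> b \<and> b \<le> k + \<sigma>
      then of_nat ((N - \<sigma>) choose k) * (z1*w1)^(N-\<sigma>-k) * (z2*w2)^k * Tm \<sigma> \<mu> z1 z2 w1 w2 (b - k) else 0))"
    (is "(\<Sum>d\<le>N. ?X d) = ?R")
proof (cases "0 \<le> int b + \<mu> \<and> int b + \<mu> \<le> int N")
  case False
  have Xz: "?X d = 0" if "d \<in> {..N}" for d
  proof -
    have "int d \<noteq> int b + \<mu>" using False that by auto
    then show ?thesis by (simp add: tensor_bd cg_zero)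
  qed
  have "(\<Sum>d\<le>N. ?X d) = 0" by (rule sum.neutral) (use Xz in blast)
  moreover have "?R = 0"
    using term_zero[OF b False] by (intro sum.neutral) auto
  ultimately show ?thesis by simp
next
  case True
  define d0 where "d0 = nat (int b + \<mu>)"
  have d0: "int d0 = int b + \<mu>" "d0 \<le> N" using True by (auto simp: d0_def)
  have z: "?X d = 0" if "d \<in> {..N} - {d0}" for d
  proof -
    have "int d \<noteq> int b + \<mu>" using that d0 by auto
    then show ?thesis by (simp add: tensor_bd cg_zero)
  qed
  have "(\<Sum>d\<le>N. ?X d) = ?X d0 + (\<Sum>d\<in>{..N} - {d0}. ?X d)"
    by (rule sum.remove) (use d0 in auto)
  also have "(\<Sum>d\<in>{..N} - {d0}. ?X d) = 0" by (rule sum.neutral) (use z in blast)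
  also have "?X d0 + 0 = ?X d0" by simp
  also have "\<dots> = (\<Sum>k\<le>N. Yt b d0 k)"
  proof -
    have "?X d0 = ((-1)^b * complex_of_real (sqrt (real (N choose b))) * z1^(N-b) * z2^b)
      * ((-1)^d0 * complex_of_real (Acoef N \<sigma> * sqrt (Bp * fact b * fact (N - b) * fact (N - d0) * fact d0)
          * (\<Sum>k\<le>N. (-1)^k * Rk b d0 k)))
      * ((-1)^d0 * complex_of_real (sqrt (real (N choose d0))) * w1^(N-d0) * w2^d0)"
      unfolding tensor_bd cg_spec[OF sN mus b d0(2) d0(1)] Bp_def Rk_def by (simp add: mult.assoc)
    also have "\<dots> = (\<Sum>k\<le>N. Yt b d0 k)"
      unfolding Yt_def sum_distrib_left of_real_sum sum_distrib_right by simp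
    finally show ?thesis .
  qed
  also have "\<dots> = ?R"
    by (intro sum.cong refl term_eq b d0) auto
  finally show ?thesis .
qed

lemma tpoly_closed_pt:
  "tpoly N \<sigma> \<mu> z1 z2 w1 w2 = complex_of_real (Kc N \<sigma> \<mu>) * (w1*z1+w2*z2)^(N-\<sigma>) * Gs \<sigma> \<mu> 0 0 0 0 z1 z2 w1 w2"
proof -
  define F where "F b k = (if k \<le> N - \<sigma> \<and> k \<le> b \<and> b \<le> k + \<sigma>
      then of_nat ((N - \<sigma>) choose k) * (z1*w1)^(N-\<sigma>-k) * (z2*w2)^k * Tm \<sigma> \<mu> z1 z2 w1 w2 (b - k) else 0)" for b k
  have "tpoly N \<sigma> \<mu> z1 z2 w1 w2 = (\<Sum>b\<le>N. \<Sum>k\<le>N. complex_of_real (Kc N \<sigma> \<mu>) * F b k)"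
    unfolding tpoly_def maj_bd F_def by (intro sum.cong refl inner_d) auto
  also have "\<dots> = complex_of_real (Kc N \<sigma> \<mu>) * (\<Sum>k\<le>N. \<Sum>b\<le>N. F b k)"
    by (subst sum.swap) (simp add: sum_distrib_left)
  also have "(\<Sum>k\<le>N. \<Sum>b\<le>N. F b k) = (\<Sum>k\<le>N. if k \<in> {..N - \<sigma>} then
      of_nat ((N - \<sigma>) choose k) * (z1*w1)^(N-\<sigma>-k) * (z2*w2)^k * Gs \<sigma> \<mu> 0 0 0 0 z1 z2 w1 w2 else 0)"
  proof (intro sum.cong refl)
    fix k assume k: "k \<in> {..N}"
    show "(\<Sum>b\<le>N. F b k) = (if k \<in> {..N - \<sigma>} then
      of_nat ((N - \<sigma>) choose k) * (z1*w1)^(N-\<sigma>-k) * (z2*w2)^k * Gs \<sigma> \<mu> 0 0 0 0 z1 z2 w1 w2 else 0)"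
    proof (cases "k \<le> N - \<sigma>")
      case False
      then show ?thesis by (simp add: F_def)
    next
      case True
      define c where "c = of_nat ((N - \<sigma>) choose k) * (z1*w1)^(N-\<sigma>-k) * (z2*w2)^k"
      have "(\<Sum>b\<le>N. F b k) = (\<Sum>b\<le>N. if b \<in> {k..k+\<sigma>} then c * Tm \<sigma> \<mu> z1 z2 w1 w2 (b - k) else 0)"
        unfolding F_def c_def using True by (intro sum.cong refl) auto
      also have "\<dots> = (\<Sum>b\<in>{..N} \<inter> {k..k+\<sigma>}. c * Tm \<sigma> \<mu> z1 z2 w1 w2 (b - k))"
        by (rule sum.inter_restrict[symmetric]) simp
      also have "{..N} \<inter> {k..k+\<sigma>} = {0+k..\<sigma>+k}" using True sN by auto
      also have "(\<Sum>b\<in>{0+k..\<sigma>+k}. c * Tm \<sigma> \<mu> z1 z2 w1 w2 (b - k)) = (\<Sum>i\<in>{0..\<sigma>}. c * Tm \<sigma> \<mu> z1 z2 w1 w2 i)"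
        by (subst sum.shift_bounds_cl_nat_ivl) simp
      also have "\<dots> = c * Gs \<sigma> \<mu> 0 0 0 0 z1 z2 w1 w2"
        unfolding Gs0 sum_distrib_left atLeast0AtMost ..
      finally show ?thesis using True unfolding c_def by simp
    qed
  qed
  also have "\<dots> = (\<Sum>k\<in>{..N} \<inter> {..N - \<sigma>}. of_nat ((N - \<sigma>) choose k) * (z1*w1)^(N-\<sigma>-k) * (z2*w2)^k * Gs \<sigma> \<mu> 0 0 0 0 z1 z2 w1 w2)"
    by (rule sum.inter_restrict[symmetric]) simp
  also have "{..N} \<inter> {..N - \<sigma>} = {..N - \<sigma>}" by auto
  also have "(\<Sum>k\<le>N - \<sigma>. of_nat ((N - \<sigma>) choose k) * (z1*w1)^(N-\<sigma>-k) * (z2*w2)^k * Gs \<sigma> \<mu> 0 0 0 0 z1 z2 w1 w2)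
     = (z2*w2 + z1*w1)^(N-\<sigma>) * Gs \<sigma> \<mu> 0 0 0 0 z1 z2 w1 w2"
    unfolding binomial_ring sum_distrib_right by (intro sum.cong refl) (simp add: mult_ac)
  finally show ?thesis by (simp add: mult_ac add.commute)
qed

end


lemma tpoly_closed:
  assumes "\<sigma> \<le> N" "\<bar>\<mu>\<bar> \<le> int \<sigma>"
  shows "tpoly N \<sigma> \<mu> = (\<lambda>z1 z2 w1 w2. complex_of_real (Kc N \<sigma> \<mu>) * (w1*z1+w2*z2)^(N-\<sigma>) * Gs \<sigma> \<mu> 0 0 0 0 z1 z2 w1 w2)"
  using tpoly_closed_pt[OF assms] by (intro ext) 

definition Bq :: "nat \<Rightarrow> int \<Rightarrow> real" where
  "Bq \<sigma> \<mu> = fact (nat (int \<sigma> + \<mu>)) * fact (nat (int \<sigma> - \<mu>))"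

lemma Kc_sq: "Kc N \<sigma> \<mu> = sqrt (fact N ^ 2 * ((2 * real \<sigma> + 1) * fact \<sigma> * fact \<sigma> * fact (N - \<sigma>) / fact (N + \<sigma> + 1)) * Bq \<sigma> \<mu> / fact (N - \<sigma>) ^ 2)"
  unfolding Kc_def Acoef_def Bq_def by (simp add: real_sqrt_mult real_sqrt_divide)

lemma lcoef_sq: "lcoef N \<sigma> = sqrt (fact (N + \<sigma> + 1) * fact (N - \<sigma>) / fact (2 * \<sigma> + 1) * fact \<sigma> ^ 2 / fact N ^ 2)"
  unfolding lcoef_def by (simp add: real_sqrt_mult real_sqrt_divide)

lemma part2_alg: fixes a p c s f t B :: real
  assumes "a > 0" "p > 0" "c > 0" "s > 0" "f > 0"
  shows "inverse (a * p / c * s ^ 2 / f ^ 2) * (s ^ 2 * (t * s * s * 1 / c) * B / 1 ^ 2)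
     = f ^ 2 * (t * s * s * p / a) * B / p ^ 2"
  using assms by (simp add: field_simps power2_eq_square)

lemma part2_coef: assumes "\<sigma> \<le> N"
  shows "Kc N \<sigma> \<mu> = inverse (lcoef N \<sigma>) * Kc \<sigma> \<sigma> \<mu>"
proof -
  have "inverse (lcoef N \<sigma>) * Kc \<sigma> \<sigma> \<mu> = sqrt (inverse (fact (N + \<sigma> + 1) * fact (N - \<sigma>) / fact (2 * \<sigma> + 1) * fact \<sigma> ^ 2 / fact N ^ 2)
     * (fact \<sigma> ^ 2 * ((2 * real \<sigma> + 1) * fact \<sigma> * fact \<sigma> * fact (\<sigma> - \<sigma>) / fact (\<sigma> + \<sigma> + 1)) * Bq \<sigma> \<mu> / fact (\<sigma> - \<sigma>) ^ 2))"
    unfolding lcoef_sq Kc_sq by (simp only: real_sqrt_mult real_sqrt_inverse)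
  also have "\<dots> = Kc N \<sigma> \<mu>"
  proof -
    have e: "\<sigma> + \<sigma> + 1 = 2 * \<sigma> + 1" "fact (\<sigma> - \<sigma>) = (1::real)" by simp_all
    show ?thesis unfolding Kc_sq e by (rule arg_cong[where f=sqrt], rule part2_alg) auto
  qed
  finally show ?thesis ..
qed


lemma p1_alg: fixes f q a x y z t s B :: real
  assumes "f > 0" "q > 0" "a > 0" "x > 0" "y > 0" "z > 0" "t * s * s * B \<ge> 0"
  shows "sqrt ((x*f)^2 * (t * s * s * (y*q) / (z*a)) * B / (y*q)^2) * (y*z) / x^2
    = sqrt (z*y) / x * sqrt (f^2 * (t * s * s * q / a) * B / q^2)"
proof -
  have e: "(x*f)^2 * (t * s * s * (y*q) / (z*a)) * B / (y*q)^2 = (x^2/(y*z)) * (f^2 * (t * s * s * q / a) * B / q^2)"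
    using assms by (simp add: field_simps power2_eq_square)
  have s1: "sqrt (x^2/(y*z)) = x / sqrt (y*z)" using assms by (simp add: real_sqrt_divide)
  have s2: "(y*z) / sqrt (y*z) = sqrt (y*z)"
    using assms by (metis less_eq_real_def mult_pos_pos real_div_sqrt)
  have "sqrt ((x*f)^2 * (t * s * s * (y*q) / (z*a)) * B / (y*q)^2) * (y*z) / x^2
     = (x / sqrt (y*z)) * sqrt (f^2 * (t * s * s * q / a) * B / q^2) * (y*z) / x^2"
    unfolding e real_sqrt_mult s1 ..
  also have "\<dots> = ((y*z) / sqrt (y*z)) / x * sqrt (f^2 * (t * s * s * q / a) * B / q^2)"
    using assms by (simp add: field_simps power2_eq_square)
  also have "\<dots> = sqrt (z*y) / x * sqrt (f^2 * (t * s * s * q / a) * B / q^2)"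
    unfolding s2 by (simp add: mult.commute)
  finally show ?thesis .
qed

lemma part1_coef: assumes "\<sigma> < N"
  shows "Kc N \<sigma> \<mu> * real ((N - \<sigma>) * (N - \<sigma> + 1 + 2 * \<sigma>)) / real N ^ 2
     = sqrt (real ((N + \<sigma> + 1) * (N - \<sigma>))) / real N * Kc (N - 1) \<sigma> \<mu>"
proof -
  obtain M where M: "N = Suc M" using assms by (cases N) auto
  obtain n' where n': "N - \<sigma> = Suc n'" using assms by (intro that[of "N - \<sigma> - 1"]) auto
  have Mn: "M - \<sigma> = n'" using M n' by simp
  have ee: "N - \<sigma> + 1 + 2 * \<sigma> = N + \<sigma> + 1" using assms by simp
  have fN: "fact N = real (Suc M) * fact M" unfolding M by simp
  have fn: "fact (N - \<sigma>) = real (Suc n') * fact n'" unfolding n' by simp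
  have fa: "fact (N + \<sigma> + 1) = real (Suc (M + \<sigma> + 1)) * fact (M + \<sigma> + 1)" unfolding M by simp
  have B: "(2 * real \<sigma> + 1) * fact \<sigma> * fact \<sigma> * Bq \<sigma> \<mu> \<ge> 0" by (simp add: Bq_def)
  have "Kc N \<sigma> \<mu> * real ((N - \<sigma>) * (N - \<sigma> + 1 + 2 * \<sigma>)) / real N ^ 2
     = sqrt ((real (Suc M) * fact M)^2 * ((2 * real \<sigma> + 1) * fact \<sigma> * fact \<sigma> * (real (Suc n') * fact n') / (real (Suc (M + \<sigma> + 1)) * fact (M + \<sigma> + 1))) * Bq \<sigma> \<mu> / (real (Suc n') * fact n')^2)
       * (real (Suc n') * real (Suc (M + \<sigma> + 1))) / real (Suc M) ^ 2"
  proof -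
    have nM: "Suc M - \<sigma> = Suc n'" using n' M by simp
    show ?thesis unfolding Kc_sq fN fn fa ee unfolding M by (simp add: nM algebra_simps)
  qed
  also have "\<dots> = sqrt (real (Suc (M + \<sigma> + 1)) * real (Suc n')) / real (Suc M)
     * sqrt (fact M ^ 2 * ((2 * real \<sigma> + 1) * fact \<sigma> * fact \<sigma> * fact n' / fact (M + \<sigma> + 1)) * Bq \<sigma> \<mu> / fact n' ^ 2)"
    by (rule p1_alg) (use B in auto)
  also have "\<dots> = sqrt (real ((N + \<sigma> + 1) * (N - \<sigma>))) / real N * Kc (N - 1) \<sigma> \<mu>"
    unfolding Kc_sq using M n' Mn by (simp add: algebra_simps)
  finally show ?thesis .
qed


lemma part1: assumes "\<sigma> \<le> N" "\<bar>\<mu>\<bar> \<le> int \<sigma>" "1 \<le> N"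
  shows "Lop N (tpoly N \<sigma> \<mu>) = (if int \<sigma> < int N
            then (\<lambda>z1 z2 w1 w2. complex_of_real (sqrt (real ((N + \<sigma> + 1) * (N - \<sigma>))) / real N)
                                  * tpoly (N - 1) \<sigma> \<mu> z1 z2 w1 w2)
            else (\<lambda>z1 z2 w1 w2. 0))"
proof (cases "\<sigma> < N")
  case True
  have t1: "tpoly (N - 1) \<sigma> \<mu> = (\<lambda>z1 z2 w1 w2. complex_of_real (Kc (N - 1) \<sigma> \<mu>) * (w1*z1+w2*z2)^(N - 1 - \<sigma>) * Gs \<sigma> \<mu> 0 0 0 0 z1 z2 w1 w2)"
    by (rule tpoly_closed) (use True assms in auto)
  have c: "complex_of_real (Kc N \<sigma> \<mu> * real ((N - \<sigma>) * (N - \<sigma> + 1 + 2 * \<sigma>)) / real N ^ 2)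
     = complex_of_real (sqrt (real ((N + \<sigma> + 1) * (N - \<sigma>))) / real N * Kc (N - 1) \<sigma> \<mu>)"
    using part1_coef[OF True] by simp
  have c2: "inverse (of_nat N ^ 2) * (complex_of_real (Kc N \<sigma> \<mu>) * of_nat ((N - \<sigma>) * (N - \<sigma> + 1 + 2 * \<sigma>)))
     = complex_of_real (sqrt (real ((N + \<sigma> + 1) * (N - \<sigma>))) / real N) * complex_of_real (Kc (N - 1) \<sigma> \<mu>)"
  proof -
    have "inverse (of_nat N ^ 2) * (complex_of_real (Kc N \<sigma> \<mu>) * of_nat ((N - \<sigma>) * (N - \<sigma> + 1 + 2 * \<sigma>)))
       = complex_of_real (Kc N \<sigma> \<mu> * real ((N - \<sigma>) * (N - \<sigma> + 1 + 2 * \<sigma>)) / real N ^ 2)"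
      by (simp add: field_simps)
    also have "\<dots> = complex_of_real (sqrt (real ((N + \<sigma> + 1) * (N - \<sigma>))) / real N) * complex_of_real (Kc (N - 1) \<sigma> \<mu>)"
      unfolding c by simp
    finally show ?thesis .
  qed
  have e: "N - \<sigma> - 1 = N - 1 - \<sigma>" by simp
  have "(\<lambda>z1 z2 w1 w2. inverse (of_nat N ^ 2) * (complex_of_real (Kc N \<sigma> \<mu>) * of_nat ((N - \<sigma>) * (N - \<sigma> + 1 + 2 * \<sigma>))
        * (w1*z1+w2*z2)^(N - \<sigma> - 1) * Gs \<sigma> \<mu> 0 0 0 0 z1 z2 w1 w2))
     = (\<lambda>z1 z2 w1 w2. complex_of_real (sqrt (real ((N + \<sigma> + 1) * (N - \<sigma>))) / real N)
          * (complex_of_real (Kc (N - 1) \<sigma> \<mu>) * (w1*z1+w2*z2)^(N - 1 - \<sigma>) * Gs \<sigma> \<mu> 0 0 0 0 z1 z2 w1 w2))"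
  proof (intro ext)
    fix z1 z2 w1 w2 :: complex
    have "inverse (of_nat N ^ 2) * (complex_of_real (Kc N \<sigma> \<mu>) * of_nat ((N - \<sigma>) * (N - \<sigma> + 1 + 2 * \<sigma>))
        * (w1*z1+w2*z2)^(N - \<sigma> - 1) * Gs \<sigma> \<mu> 0 0 0 0 z1 z2 w1 w2)
      = (inverse (of_nat N ^ 2) * (complex_of_real (Kc N \<sigma> \<mu>) * of_nat ((N - \<sigma>) * (N - \<sigma> + 1 + 2 * \<sigma>))))
        * ((w1*z1+w2*z2)^(N - 1 - \<sigma>) * Gs \<sigma> \<mu> 0 0 0 0 z1 z2 w1 w2)"
      by (simp only: e mult.assoc)
    also have "\<dots> = complex_of_real (sqrt (real ((N + \<sigma> + 1) * (N - \<sigma>))) / real N) * complex_of_real (Kc (N - 1) \<sigma> \<mu>)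
        * ((w1*z1+w2*z2)^(N - 1 - \<sigma>) * Gs \<sigma> \<mu> 0 0 0 0 z1 z2 w1 w2)"
      by (simp only: c2)
    finally show "inverse (of_nat N ^ 2) * (complex_of_real (Kc N \<sigma> \<mu>) * of_nat ((N - \<sigma>) * (N - \<sigma> + 1 + 2 * \<sigma>))
        * (w1*z1+w2*z2)^(N - \<sigma> - 1) * Gs \<sigma> \<mu> 0 0 0 0 z1 z2 w1 w2)
     = complex_of_real (sqrt (real ((N + \<sigma> + 1) * (N - \<sigma>))) / real N)
          * (complex_of_real (Kc (N - 1) \<sigma> \<mu>) * (w1*z1+w2*z2)^(N - 1 - \<sigma>) * Gs \<sigma> \<mu> 0 0 0 0 z1 z2 w1 w2)"
      by (simp only: mult.assoc)
  qed
  then show ?thesis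
    unfolding tpoly_closed[OF assms(1,2)] Lop_uG t1 using True by simp
next
  case False
  then have "\<sigma> = N" using assms by simp
  then show ?thesis unfolding tpoly_closed[OF assms(1,2)] Lop_uG by simp
qed

lemma part1b: assumes "1 \<le> N"
  shows "complex_of_real (1 / sqrt (real (N + 1))) * Lop N (tpoly N 0 0) z1 z2 w1 w2
              = complex_of_real (1 / sqrt (real N)) * tpoly (N - 1) 0 0 z1 z2 w1 w2"
proof -
  have "Lop N (tpoly N 0 0) z1 z2 w1 w2 = complex_of_real (sqrt (real ((N + 0 + 1) * (N - 0))) / real N) * tpoly (N - 1) 0 0 z1 z2 w1 w2"
    using part1[of 0 N 0] assms by simp
  moreover have "1 / sqrt (real (N + 1)) * (sqrt (real ((N + 0 + 1) * (N - 0))) / real N) = 1 / sqrt (real N)"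
  proof -
    have "real ((N + 0 + 1) * (N - 0)) = (real N + 1) * real N" by (simp add: algebra_simps)
    then have "sqrt (real ((N + 0 + 1) * (N - 0))) = sqrt (real N + 1) * sqrt (real N)" by (simp only: real_sqrt_mult)
    moreover have "real N = sqrt (real N) * sqrt (real N)" by simp
    ultimately show ?thesis using assms by (simp add: field_simps)
  qed
  ultimately show ?thesis
    by (metis (no_types, lifting) mult.assoc of_real_mult)
qed

lemma part2: assumes "\<sigma> \<le> N" "\<bar>\<mu>\<bar> \<le> int \<sigma>"
  shows "tpoly N \<sigma> \<mu> z1 z2 w1 w2
              = complex_of_real (inverse (lcoef N \<sigma>)) * (w1 * z1 + w2 * z2) ^ (N - \<sigma>)
                * tpoly \<sigma> \<sigma> \<mu> z1 z2 w1 w2"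
  unfolding tpoly_closed[OF assms] tpoly_closed[OF order_refl assms(2)] part2_coef[OF assms(1)]
  by (simp add: mult_ac)


definition bdp :: "nat \<Rightarrow> (nat \<Rightarrow> nat \<Rightarrow> complex) \<Rightarrow> fn4" where
  "bdp M a = (\<lambda>z1 z2 w1 w2. \<Sum>b\<le>M. \<Sum>d\<le>M. a b d * (z1^(M-b) * z2^b * w1^(M-d) * w2^d))"

lemma d_up1_bdp: "d_up1 (bdp M a) = (\<lambda>z1 z2 w1 w2. \<Sum>b\<le>M. \<Sum>d\<le>M. a b d * (z1^(M-b) * z2^b * (of_nat (M-d) * w1^(M-d-1)) * w2^d))"
proof (intro ext)
  fix z1 z2 w1 w2 :: complex
  have "((\<lambda>t. \<Sum>b\<le>M. \<Sum>d\<le>M. a b d * (z1^(M-b) * z2^b * t^(M-d) * w2^d)) has_field_derivative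
     (\<Sum>b\<le>M. \<Sum>d\<le>M. a b d * (z1^(M-b) * z2^b * (of_nat (M-d) * (1 * w1^(M-d-Suc 0))) * w2^d))) (at w1)"
    by (intro DERIV_sum DERIV_cmult DERIV_cmult_right DERIV_power DERIV_ident)
  then show "d_up1 (bdp M a) z1 z2 w1 w2 = (\<Sum>b\<le>M. \<Sum>d\<le>M. a b d * (z1^(M-b) * z2^b * (of_nat (M-d) * w1^(M-d-1)) * w2^d))"
    unfolding d_up1_def bdp_def by (intro DERIV_imp_deriv) simp
qed

lemma d_up2_bdp: "d_up2 (bdp M a) = (\<lambda>z1 z2 w1 w2. \<Sum>b\<le>M. \<Sum>d\<le>M. a b d * (z1^(M-b) * z2^b * w1^(M-d) * (of_nat d * w2^(d-1))))"
proof (intro ext)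
  fix z1 z2 w1 w2 :: complex
  have "((\<lambda>t. \<Sum>b\<le>M. \<Sum>d\<le>M. a b d * (z1^(M-b) * z2^b * w1^(M-d) * t^d)) has_field_derivative
     (\<Sum>b\<le>M. \<Sum>d\<le>M. a b d * (z1^(M-b) * z2^b * w1^(M-d) * (of_nat d * (1 * w2^(d-Suc 0)))))) (at w2)"
    by (intro DERIV_sum DERIV_cmult DERIV_cmult_right DERIV_power DERIV_ident)
  then show "d_up2 (bdp M a) z1 z2 w1 w2 = (\<Sum>b\<le>M. \<Sum>d\<le>M. a b d * (z1^(M-b) * z2^b * w1^(M-d) * (of_nat d * w2^(d-1))))"
    unfolding d_up2_def bdp_def by (intro DERIV_imp_deriv) simp
qed

lemma d_lo1_bdp: "d_lo1 (\<lambda>z1 z2 w1 w2. \<Sum>b\<le>M. \<Sum>d\<le>M. a b d * (z1^(M-b) * z2^b * (of_nat (M-d) * w1^(M-d-1)) * w2^d)) z1 z2 w1 w2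
  = (\<Sum>b\<le>M. \<Sum>d\<le>M. a b d * ((of_nat (M-b) * z1^(M-b-1)) * z2^b * (of_nat (M-d) * w1^(M-d-1)) * w2^d))"
proof -
  have "((\<lambda>t. \<Sum>b\<le>M. \<Sum>d\<le>M. a b d * (t^(M-b) * z2^b * (of_nat (M-d) * w1^(M-d-1)) * w2^d)) has_field_derivative
     (\<Sum>b\<le>M. \<Sum>d\<le>M. a b d * ((of_nat (M-b) * (1 * z1^(M-b-Suc 0))) * z2^b * (of_nat (M-d) * w1^(M-d-1)) * w2^d))) (at z1)"
    by (intro DERIV_sum DERIV_cmult DERIV_cmult_right DERIV_power DERIV_ident)
  then show ?thesis unfolding d_lo1_def by (intro DERIV_imp_deriv) simp
qed

lemma d_lo2_bdp: "d_lo2 (\<lambda>z1 z2 w1 w2. \<Sum>b\<le>M. \<Sum>d\<le>M. a b d * (z1^(M-b) * z2^b * w1^(M-d) * (of_nat d * w2^(d-1)))) z1 z2 w1 w2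
  = (\<Sum>b\<le>M. \<Sum>d\<le>M. a b d * (z1^(M-b) * (of_nat b * z2^(b-1)) * w1^(M-d) * (of_nat d * w2^(d-1))))"
proof -
  have "((\<lambda>t. \<Sum>b\<le>M. \<Sum>d\<le>M. a b d * (z1^(M-b) * t^b * w1^(M-d) * (of_nat d * w2^(d-1)))) has_field_derivative
     (\<Sum>b\<le>M. \<Sum>d\<le>M. a b d * (z1^(M-b) * (of_nat b * (1 * z2^(b-Suc 0))) * w1^(M-d) * (of_nat d * w2^(d-1))))) (at z2)"
    by (intro DERIV_sum DERIV_cmult DERIV_cmult_right DERIV_power DERIV_ident)
  then show ?thesis unfolding d_lo2_def by (intro DERIV_imp_deriv) simp
qed


lemma sum_last: "f (Suc n) = 0 \<Longrightarrow> (\<Sum>b\<le>Suc n. f b) = (\<Sum>b\<le>n. f b)"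
  by (simp add: sum.atMost_Suc)

lemma sum_first: "f 0 = 0 \<Longrightarrow> (\<Sum>b\<le>Suc n. f b) = (\<Sum>b\<le>n. f (Suc b))"
  unfolding sum.atMost_Suc_shift by simp

lemma comb_sums: fixes c :: complex
  shows "inverse c * ((\<Sum>b\<le>M. \<Sum>d\<le>M. p b d * mo b d) + (\<Sum>b\<le>M. \<Sum>d\<le>M. q b d * mo b d))
     = (\<Sum>b\<le>M. \<Sum>d\<le>M. inverse c * (p b d + q b d) * mo b d)"
  by (simp add: sum.distrib[symmetric] sum_distrib_left algebra_simps)

definition ptc :: "nat \<Rightarrow> (nat \<Rightarrow> nat \<Rightarrow> complex) \<Rightarrow> nat \<Rightarrow> nat \<Rightarrow> complex" where
  "ptc M a b d = inverse (of_nat M ^ 2) * (of_nat ((M - b) * (M - d)) * a b d + of_nat ((b + 1) * (d + 1)) * a (b + 1) (d + 1))"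

lemma Lop_bdp: "Lop (Suc M) (bdp (Suc M) a) = bdp M (ptc (Suc M) a)"
proof (intro ext)
  fix z1 z2 w1 w2 :: complex
  define mo where "mo b d = z1^(M-b) * z2^b * w1^(M-d) * w2^d" for b d
  have S1: "d_lo1 (d_up1 (bdp (Suc M) a)) z1 z2 w1 w2 = (\<Sum>b\<le>M. \<Sum>d\<le>M. of_nat ((Suc M - b) * (Suc M - d)) * a b d * mo b d)"
  proof -
    have "d_lo1 (d_up1 (bdp (Suc M) a)) z1 z2 w1 w2 = (\<Sum>b\<le>Suc M. \<Sum>d\<le>Suc M. of_nat ((Suc M - b) * (Suc M - d)) * a b d * mo b d)"
      unfolding d_up1_bdp d_lo1_bdp
    proof (intro sum.cong refl)
      fix b d assume "b \<in> {..Suc M}" "d \<in> {..Suc M}"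
      show "a b d * (of_nat (Suc M - b) * z1 ^ (Suc M - b - 1) * z2 ^ b * (of_nat (Suc M - d) * w1 ^ (Suc M - d - 1)) * w2 ^ d)
         = of_nat ((Suc M - b) * (Suc M - d)) * a b d * mo b d"
      proof (cases "b \<le> M \<and> d \<le> M")
        case True
        then have e: "Suc M - b - 1 = M - b" "Suc M - d - 1 = M - d" by auto
        show ?thesis by (simp only: e of_nat_mult mo_def mult_ac)
      next
        case False
        then have "Suc M - b = 0 \<or> Suc M - d = 0" using \<open>b \<in> {..Suc M}\<close> \<open>d \<in> {..Suc M}\<close> by auto
        then show ?thesis by (elim disjE) (simp_all only: mult_zero_left mult_zero_right of_nat_0 mult_0_right)
      qed
    qed
    also have "\<dots> = (\<Sum>b\<le>M. \<Sum>d\<le>M. of_nat ((Suc M - b) * (Suc M - d)) * a b d * mo b d)"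
      by (subst sum_last) (simp_all add: sum_last)
    finally show ?thesis .
  qed
  have S2: "d_lo2 (d_up2 (bdp (Suc M) a)) z1 z2 w1 w2 = (\<Sum>b\<le>M. \<Sum>d\<le>M. of_nat ((b + 1) * (d + 1)) * a (b + 1) (d + 1) * mo b d)"
  proof -
    define F where "F b d = a b d * (z1^(Suc M-b) * (of_nat b * z2^(b-1)) * w1^(Suc M-d) * (of_nat d * w2^(d-1)))" for b d
    have "d_lo2 (d_up2 (bdp (Suc M) a)) z1 z2 w1 w2 = (\<Sum>b\<le>Suc M. \<Sum>d\<le>Suc M. F b d)"
      unfolding d_up2_bdp d_lo2_bdp F_def ..
    also have "\<dots> = (\<Sum>b\<le>Suc M. \<Sum>d\<le>M. F b (Suc d))"
      by (intro sum.cong refl sum_first) (simp add: F_def)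
    also have "\<dots> = (\<Sum>b\<le>M. \<Sum>d\<le>M. F (Suc b) (Suc d))"
      by (rule sum_first) (simp add: F_def)
    also have "\<dots> = (\<Sum>b\<le>M. \<Sum>d\<le>M. of_nat ((b + 1) * (d + 1)) * a (b + 1) (d + 1) * mo b d)"
      unfolding mo_def F_def by (intro sum.cong refl) (simp add: algebra_simps)
    finally show ?thesis .
  qed
  show "Lop (Suc M) (bdp (Suc M) a) z1 z2 w1 w2 = bdp M (ptc (Suc M) a) z1 z2 w1 w2"
    unfolding Lop_def S1 S2 comb_sums unfolding bdp_def ptc_def mo_def by simp
qed


lemma maj_as_bdp: "majorana M C = bdp M (\<lambda>b d. (-1)^b * complex_of_real (sqrt (real (M choose b)))
    * C (int M - 2 * int b) (int M - 2 * int d) * ((-1)^d * complex_of_real (sqrt (real (M choose d)))))"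
  unfolding bdp_def by (intro ext) (simp add: maj_bd mult_ac)

lemma bdp_cong: "(\<And>b d. b \<le> M \<Longrightarrow> d \<le> M \<Longrightarrow> a b d = a' b d) \<Longrightarrow> bdp M a = bdp M a'"
  unfolding bdp_def by (intro ext sum.cong refl) auto

definition Ptr :: "nat \<Rightarrow> op \<Rightarrow> op" where
  "Ptr M C = (\<lambda>m m'. (complex_of_real (sqrt (real ((Suc M - half (int M - m)) * (Suc M - half (int M - m'))))) * C (m + 1) (m' + 1)
      + complex_of_real (sqrt (real ((half (int M - m) + 1) * (half (int M - m') + 1)))) * C (m - 1) (m' - 1)) / of_nat (Suc M))"

lemma L1: assumes "b \<le> M"
  shows "of_nat (Suc M - b) * complex_of_real (sqrt (real (Suc M choose b)))
    = complex_of_real (sqrt (real (Suc M))) * complex_of_real (sqrt (real (M choose b))) * complex_of_real (sqrt (real (Suc M - b)))"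
proof -
  have "(Suc M - b) * (Suc M choose b) = Suc M * (M choose b)" using binomial_absorb_comp[of "Suc M" b] by simp
  then have e: "real (Suc M - b) * real (Suc M choose b) = real (Suc M) * real (M choose b)"
    by (metis of_nat_mult)
  have "real (Suc M - b) * sqrt (real (Suc M choose b)) = sqrt (real (Suc M - b) * real (Suc M - b) * real (Suc M choose b))"
    by (simp add: real_sqrt_mult)
  also have "\<dots> = sqrt (real (Suc M) * real (M choose b) * real (Suc M - b))"
    by (metis e mult.commute mult.left_commute)
  also have "\<dots> = sqrt (real (Suc M)) * sqrt (real (M choose b)) * sqrt (real (Suc M - b))"
    by (simp add: real_sqrt_mult)
  finally show ?thesis by (metis of_real_mult of_real_of_nat_eq)
qed

lemma L2:
  shows "of_nat (b + 1) * complex_of_real (sqrt (real (Suc M choose (b + 1))))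
    = complex_of_real (sqrt (real (Suc M))) * complex_of_real (sqrt (real (M choose b))) * complex_of_real (sqrt (real (b + 1)))"
proof -
  have "Suc b * (Suc M choose Suc b) = Suc M * (M choose b)" by (rule Suc_times_binomial)
  then have e: "real (b + 1) * real (Suc M choose (b + 1)) = real (Suc M) * real (M choose b)"
    by (metis Suc_eq_plus1 of_nat_mult)
  have "real (b + 1) * sqrt (real (Suc M choose (b + 1))) = sqrt (real (b + 1) * real (b + 1) * real (Suc M choose (b + 1)))"
    by (simp add: real_sqrt_mult del: of_nat_add)
  also have "\<dots> = sqrt (real (Suc M) * real (M choose b) * real (b + 1))"
    by (metis e mult.commute mult.left_commute)
  also have "\<dots> = sqrt (real (Suc M)) * sqrt (real (M choose b)) * sqrt (real (b + 1))"
    by (simp add: real_sqrt_mult del: of_nat_add)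
  finally show ?thesis by (metis of_real_mult of_real_of_nat_eq)
qed

lemma gen_alg: fixes x1 y1 x2 y2 p p' u u' r q q' s1 t1 s2 t2 m sg1 sg2 C1 C2 :: complex
  assumes "x1 * p = r * q * s1" "y1 * p' = r * q' * t1" "x2 * u = r * q * s2" "y2 * u' = r * q' * t2" "r * r = m" "m \<noteq> 0"
  shows "inverse (m^2) * ((x1*y1) * (sg1 * p * C1 * (sg2 * p')) + (x2*y2) * ((-sg1) * u * C2 * ((-sg2) * u')))
     = sg1 * q * ((s1*t1 * C1 + s2*t2 * C2)/m) * (sg2 * q')"
proof -
  have "(x1*y1) * (sg1 * p * C1 * (sg2 * p')) + (x2*y2) * ((-sg1) * u * C2 * ((-sg2) * u'))
     = sg1 * sg2 * ((x1 * p) * (y1 * p') * C1 + (x2 * u) * (y2 * u') * C2)" by (simp add: algebra_simps)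
  also have "\<dots> = sg1 * sg2 * ((r * r) * (q * q' * (s1 * t1 * C1 + s2 * t2 * C2)))"
    unfolding assms(1-4) by (simp add: algebra_simps)
  finally show ?thesis using assms(5,6) by (simp add: field_simps power2_eq_square)
qed

lemma neg1: "(-1::complex)^(b+1) = - ((-1)^b)" by simp

lemma Ptr_maj: "majorana M (Ptr M C) = Lop (Suc M) (majorana (Suc M) C)"
  unfolding maj_as_bdp[of "Suc M"] Lop_bdp unfolding maj_as_bdp
proof (rule bdp_cong)
  fix b d assume b: "b \<le> M" and d: "d \<le> M"
  have h: "half (int M - (int M - 2 * int b)) = b" "half (int M - (int M - 2 * int d)) = d" by (simp_all add: half_M2 half_2)
  have i1: "int M - 2 * int b + 1 = int (Suc M) - 2 * int b" "int M - 2 * int d + 1 = int (Suc M) - 2 * int d" by simp_all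
  have i2: "int M - 2 * int b - 1 = int (Suc M) - 2 * int (b + 1)" "int M - 2 * int d - 1 = int (Suc M) - 2 * int (d + 1)" by simp_all
  have sq: "complex_of_real (sqrt (real (x * y))) = complex_of_real (sqrt (real x)) * complex_of_real (sqrt (real y))" for x y :: nat
    by (simp add: real_sqrt_mult)
  have "(-1) ^ b * complex_of_real (sqrt (real (M choose b))) * Ptr M C (int M - 2 * int b) (int M - 2 * int d) *
        ((-1) ^ d * complex_of_real (sqrt (real (M choose d))))
     = (-1) ^ b * complex_of_real (sqrt (real (M choose b))) *
        ((complex_of_real (sqrt (real (Suc M - b))) * complex_of_real (sqrt (real (Suc M - d))) * C (int (Suc M) - 2 * int b) (int (Suc M) - 2 * int d)
         + complex_of_real (sqrt (real (b + 1))) * complex_of_real (sqrt (real (d + 1))) * C (int (Suc M) - 2 * int (b + 1)) (int (Suc M) - 2 * int (d + 1)))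
        / of_nat (Suc M)) *
        ((-1) ^ d * complex_of_real (sqrt (real (M choose d))))"
    unfolding Ptr_def h i1 i2 sq ..
  also have "\<dots> = ptc (Suc M) (\<lambda>b d. (-1)^b * complex_of_real (sqrt (real (Suc M choose b)))
    * C (int (Suc M) - 2 * int b) (int (Suc M) - 2 * int d) * ((-1)^d * complex_of_real (sqrt (real (Suc M choose d))))) b d"
  proof -
    have rr: "complex_of_real (sqrt (real (Suc M))) * complex_of_real (sqrt (real (Suc M))) = of_nat (Suc M)"
      by (metis of_real_mult of_real_of_nat_eq of_nat_0_le_iff real_sqrt_mult_self abs_of_nonneg)
    have nz: "(of_nat (Suc M) :: complex) \<noteq> 0" by (rule of_nat_neq_0)
    show ?thesis unfolding ptc_def of_nat_mult neg1 by (rule gen_alg[symmetric, OF L1[OF b] L1[OF d] L2 L2 rr nz])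
  qed
  finally show "(-1) ^ b * complex_of_real (sqrt (real (M choose b))) * Ptr M C (int M - 2 * int b) (int M - 2 * int d) *
        ((-1) ^ d * complex_of_real (sqrt (real (M choose d)))) = ptc (Suc M) (\<lambda>b d. (-1)^b * complex_of_real (sqrt (real (Suc M choose b)))
    * C (int (Suc M) - 2 * int b) (int (Suc M) - 2 * int d) * ((-1)^d * complex_of_real (sqrt (real (Suc M choose d))))) b d" .
qed


lemma Ptr_trace: "op_trace M (Ptr M C) = op_trace (Suc M) C"
proof -
  define f where "f b = C (int (Suc M) - 2 * int b) (int (Suc M) - 2 * int b)" for b
  have sqx: "sqrt (real (x * x)) = real x" for x :: nat by simp
  have t: "Ptr M C (int M - 2 * int b) (int M - 2 * int b) = (of_nat (Suc M - b) * f b + of_nat (Suc b) * f (Suc b)) / of_nat (Suc M)" for b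
  proof -
    have h: "half (int M - (int M - 2 * int b)) = b" by (simp add: half_M2 half_2)
    have i1: "int M - 2 * int b + 1 = int (Suc M) - 2 * int b" by simp
    have i2: "int M - 2 * int b - 1 = int (Suc M) - 2 * int (Suc b)" by simp
    show ?thesis unfolding Ptr_def h i1 i2 sqx f_def by simp
  qed
  have s1: "(\<Sum>b\<le>M. of_nat (Suc M - b) * f b) = (\<Sum>b\<le>Suc M. of_nat (Suc M - b) * f b)"
    by (rule sum_last[symmetric]) simp
  have s2: "(\<Sum>b\<le>M. of_nat (Suc b) * f (Suc b)) = (\<Sum>b\<le>Suc M. of_nat b * f b)"
    by (rule sum_first[symmetric, where f="\<lambda>b. of_nat b * f b"]) simp
  have "op_trace M (Ptr M C) = (\<Sum>b\<le>M. (of_nat (Suc M - b) * f b + of_nat (Suc b) * f (Suc b)) / of_nat (Suc M))"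
    unfolding op_trace_def sum_spins t ..
  also have "\<dots> = ((\<Sum>b\<le>M. of_nat (Suc M - b) * f b) + (\<Sum>b\<le>M. of_nat (Suc b) * f (Suc b))) / of_nat (Suc M)"
    by (simp add: sum_divide_distrib sum.distrib add_divide_distrib)
  also have "\<dots> = (\<Sum>b\<le>Suc M. of_nat (Suc M) * f b) / of_nat (Suc M)"
    unfolding s1 s2 sum.distrib[symmetric]
  proof (intro arg_cong[where f="\<lambda>x. x / of_nat (Suc M)"] sum.cong refl)
    fix b assume "b \<in> {..Suc M}"
    then have "of_nat (Suc M - b) + of_nat b = (of_nat (Suc M) :: complex)" by (simp add: of_nat_diff)
    then show "of_nat (Suc M - b) * f b + of_nat b * f b = of_nat (Suc M) * f b" by (metis distrib_right)
  qed
  also have "\<dots> = (\<Sum>b\<le>Suc M. f b)" by (simp add: sum_distrib_left[symmetric] del: of_nat_Suc)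
  also have "\<dots> = op_trace (Suc M) C" unfolding op_trace_def sum_spins f_def ..
  finally show ?thesis .
qed

fun Phi :: "nat \<Rightarrow> fn4 \<Rightarrow> complex" where
  "Phi 0 p = p 0 0 0 0"
| "Phi (Suc M) p = Phi M (Lop (Suc M) p)"

lemma Phi_maj: "Phi M (majorana M C) = op_trace M C"
proof (induction M arbitrary: C)
  case 0
  have "spins 0 = {0}" by (auto simp: spins_def)
  then show ?case by (simp add: majorana_def op_trace_def half_def)
next
  case (Suc M)
  have "Phi (Suc M) (majorana (Suc M) C) = Phi M (majorana M (Ptr M C))" by (simp add: Ptr_maj)
  also have "\<dots> = op_trace M (Ptr M C)" by (rule Suc.IH)
  also have "\<dots> = op_trace (Suc M) C" by (rule Ptr_trace)
  finally show ?case .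
qed

lemma trace_part: assumes "1 \<le> N" "majorana (N - 1) C' = Lop N (majorana N C)"
  shows "op_trace (N - 1) C' = op_trace N C"
proof -
  obtain M where M: "N = Suc M" using assms(1) by (cases N) auto
  have "op_trace (N - 1) C' = Phi M (majorana M C')" using M by (simp add: Phi_maj)
  also have "\<dots> = Phi M (Lop (Suc M) (majorana (Suc M) C))" using assms(2) M by simp
  also have "\<dots> = Phi (Suc M) (majorana (Suc M) C)" by simp
  also have "\<dots> = op_trace N C" using M by (simp add: Phi_maj)
  finally show ?thesis .
qed


theorem theorem1:
  fixes N \<sigma> :: nat and \<mu> :: int
  assumes "1 \<le> N" and "\<sigma> \<le> N" and "\<bar>\<mu>\<bar> \<le> int \<sigma>"
  shows "Lop N (tpoly N \<sigma> \<mu>) =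
           (if int \<sigma> < int N
            then (\<lambda>z1 z2 w1 w2. complex_of_real (sqrt (real ((N + \<sigma> + 1) * (N - \<sigma>))) / real N)
                                  * tpoly (N - 1) \<sigma> \<mu> z1 z2 w1 w2)
            else (\<lambda>z1 z2 w1 w2. 0))
       \<and> (\<forall>z1 z2 w1 w2. complex_of_real (1 / sqrt (real (N + 1))) * Lop N (tpoly N 0 0) z1 z2 w1 w2
              = complex_of_real (1 / sqrt (real N)) * tpoly (N - 1) 0 0 z1 z2 w1 w2)
       \<and> (2 \<le> N \<longrightarrow> (\<forall>C C'. majorana (N - 1) C' = Lop N (majorana N C)
                               \<longrightarrow> op_trace (N - 1) C' = op_trace N C))
       \<and> (\<forall>z1 z2 w1 w2. tpoly N \<sigma> \<mu> z1 z2 w1 w2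
              = complex_of_real (inverse (lcoef N \<sigma>)) * (w1 * z1 + w2 * z2) ^ (N - \<sigma>)
                * tpoly \<sigma> \<sigma> \<mu> z1 z2 w1 w2)"
proof (intro conjI allI impI)
  show "Lop N (tpoly N \<sigma> \<mu>) =
           (if int \<sigma> < int N
            then (\<lambda>z1 z2 w1 w2. complex_of_real (sqrt (real ((N + \<sigma> + 1) * (N - \<sigma>))) / real N)
                                  * tpoly (N - 1) \<sigma> \<mu> z1 z2 w1 w2)
            else (\<lambda>z1 z2 w1 w2. 0))"
    by (rule part1) (use assms in auto)
next
  fix z1 z2 w1 w2 :: complex
  show "complex_of_real (1 / sqrt (real (N + 1))) * Lop N (tpoly N 0 0) z1 z2 w1 w2
              = complex_of_real (1 / sqrt (real N)) * tpoly (N - 1) 0 0 z1 z2 w1 w2"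
    by (rule part1b) (use assms in auto)
next
  fix C C' assume "majorana (N - 1) C' = Lop N (majorana N C)"
  then show "op_trace (N - 1) C' = op_trace N C"
    by (intro trace_part) (use assms in auto)
next
  fix z1 z2 w1 w2 :: complex
  show "tpoly N \<sigma> \<mu> z1 z2 w1 w2
              = complex_of_real (inverse (lcoef N \<sigma>)) * (w1 * z1 + w2 * z2) ^ (N - \<sigma>)
                * tpoly \<sigma> \<sigma> \<mu> z1 z2 w1 w2"
    by (rule part2) (use assms in auto)
qed

end
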